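(* Let $d\ge 1$, $s\in\mathbb{N}$, and let $\mathbf{u}\in\mathbb{C}^d$ have i.i.d. entries $u_j\sim\mathcal{CN}(0,1)$. For all $\mathbf{x},\mathbf{y}\in\mathbb{R}^d$, $$k_{2s}(\mathbf{x},\mathbf{y}):=\mathbb{E}\big[\,|\mathbf{x}^\top\mathbf{u}|^{2s}\,|\mathbf{y}^\top\mathbf{u}|^{2s}\,\big]=\sum_{i=0}^{s}(s!)^2\binom{s}{i}^2\,(\mathbf{x}^\top\mathbf{y})^{2i}\,\big(\|\mathbf{x}\|_2\|\mathbf{y}\|_2\big)^{2(s-i)} .$$ Equivalently, for nonzero $\mathbf{x},\mathbf{y}$ with $\cos\theta=\frac{\mathbf{x}^\top\mathbf{y}}{\|\mathbf{x}\|_2\|\mathbf{y}\|_2}$, $k_{2s}(\mathbf{x},\mathbf{y})=\|\mathbf{x}\|_2^{2s}\|\mathbf{y}\|_2^{2s}\sum_{i=0}^s(s!)^2\binom{s}{i}^2\cos^{2i}\theta$. Consequently, with $\mathbf{U}\in\mathbb{C}^{D\times d}$ having i.i.d. $\mathcal{CN}(0,1)$ entries and $\phi(\mathbf{x})=\frac{1}{\sqrt D}|\mathbf{U}\mathbf{x}|^{2s}$ (entrywise), $\phi(\mathbf{x})^\top\phi(\mathbf{y})\to k_{2s}(\mathbf{x},\mathbf{y})$ almost surely as $D\to\infty$.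
   Context: $\mathcal{CN}(0,1)$ denotes the standard circularly-symmetric complex Gaussian distribution: $u=a+ib$ with $a,b$ independent real $\mathcal{N}(0,1/2)$, so $\mathbb{E}|u|^2=1$. For $\mathbf{x}\in\mathbb{R}^d$ and $\mathbf{u}\in\mathbb{C}^d$, $\mathbf{x}^\top\mathbf{u}=\sum_j x_j u_j$ (no conjugation). $\|\cdot\|_2$ is the Euclidean norm. The rows of $\mathbf{U}$ are i.i.d. copies of $\mathbf{u}$, and $|\cdot|^{2s}$ applied to a vector acts entrywise. *)

theory Defs
  imports "HOL-Probability.Probability"
begin

text \<open>Standard circularly-symmetric complex Gaussian CN(0,1): the law of a + i b
  with a, b independent real normal variables of mean 0 and variance 1/2.\<close>
definition std_complex_normal :: "complex measure" where
  "std_complex_normal =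
     distr (density lborel (normal_density 0 (sqrt (1/2)))
            \<Otimes>\<^sub>M density lborel (normal_density 0 (sqrt (1/2))))
           borel (\<lambda>(a, b). Complex a b)"

definition rc_dot :: "real ^ 'd \<Rightarrow> ('d \<Rightarrow> complex) \<Rightarrow> complex" where
  "rc_dot x u = (\<Sum>j\<in>UNIV. complex_of_real (x $ j) * u j)"

end

theory Submission
  imports Defs "HOL-Computational_Algebra.Polynomial"
begin

definition nu :: "real measure" where
  "nu = density lborel (normal_density 0 (sqrt (1/2)))"

lemma prob_space_nu: "prob_space nu"
  unfolding nu_def by (rule prob_space_normal_density) simp

lemma sets_nu[measurable_cong, simp]: "sets nu = sets borel"
  unfolding nu_def by simp

lemma space_nu[simp]: "space nu = UNIV"
  unfolding nu_def by simp

lemma integrable_nu_pow: "integrable nu (\<lambda>t. t ^ n)"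
  unfolding nu_def
  using integrable_normal_moment[of "sqrt (1/2)" 0 n]
  by (subst integrable_density) auto

lemma integrable_nu_abs_pow: "integrable nu (\<lambda>t. \<bar>t\<bar> ^ n)"
  unfolding nu_def
  using integrable_normal_moment_abs[of "sqrt (1/2)" 0 n]
  by (subst integrable_density) auto

lemma integral_nu_pow: "integral\<^sup>L nu (\<lambda>t. t ^ n) = (\<integral>t. normal_density 0 (sqrt (1/2)) t * t ^ n \<partial>lborel)"
  unfolding nu_def by (subst integral_density) auto

lemma nd_odd: "(\<integral>t. normal_density 0 (sqrt (1/2)) t * t^(2*k+1) \<partial>lborel) = 0"
  using integral_normal_moment_odd[of "sqrt (1/2)" 0 k] by simp

lemma nd_even: "(\<integral>t. normal_density 0 (sqrt (1/2)) t * t^(2*k) \<partial>lborel) = fact (2 * k) / ((2 / (sqrt (1/2))\<^sup>2)^k * fact k)"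
  using integral_normal_moment_even[of "sqrt (1/2)" 0 k] by simp

lemma nu_moment_rec: "integral\<^sup>L nu (\<lambda>t. t ^ Suc n) = 1/2 * real n * integral\<^sup>L nu (\<lambda>t. t ^ (n - 1))"
proof (cases "even n")
  case True
  then obtain k where n: "n = 2*k" by auto
  have "integral\<^sup>L nu (\<lambda>t. t ^ Suc n) = 0"
  proof -
    have e: "Suc n = 2*k+1" using n by simp
    show ?thesis unfolding e integral_nu_pow
      using nd_odd[of k] by (simp only: diff_zero)
  qed
  moreover have "real n * integral\<^sup>L nu (\<lambda>t. t ^ (n - 1)) = 0"
  proof (cases k)
    case (Suc k')
    then have "n - 1 = 2*k' + 1" using n by simp
    then have "integral\<^sup>L nu (\<lambda>t. t ^ (n - 1)) = 0" unfolding integral_nu_pow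
      using nd_odd[of k'] by (simp only: diff_zero)
    then show ?thesis by simp
  qed (simp add: n)
  ultimately show ?thesis by simp
next
  case False
  then obtain k where n: "n = 2*k+1" by (metis oddE)
  have a: "Suc n = 2 * (k+1)" "n - 1 = 2 * k" using n by auto
  have q: "(2 / (sqrt (1/2::real))\<^sup>2) = 4" by simp
  have v1: "integral\<^sup>L nu (\<lambda>t. t ^ Suc n) = fact (2 * (k+1)) / (4^(k+1) * fact (k+1))"
    using nd_even[of "k+1"] unfolding integral_nu_pow a q .
  have v0: "integral\<^sup>L nu (\<lambda>t. t ^ (n-1)) = fact (2 * k) / (4^k * fact k)"
    using nd_even[of "k"] unfolding integral_nu_pow a q .
  have f1: "fact (2 * (k+1)) = (real (2*k+2) * real (2*k+1)) * (fact (2*k) :: real)"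
    by (simp add: fact_Suc algebra_simps)
  have f2: "fact (k+1) = real (k+1) * (fact k :: real)" by simp
  have "fact (2 * (k+1)) / (4^(k+1) * fact (k+1)) = 1/2 * real n * (fact (2 * k) / (4^k * fact k) :: real)"
  proof -
    have g: "((2*K+2)*(2*K+1)*A)/(4*P*((K+1)*B)) = 1/2*(2*K+1)*(A/(P*B))"
      if "P > 0" "B > 0" "K \<ge> 0" for K A B P :: real
    proof -
      have "((2*K+2)*(2*K+1)*A)/(4*P*((K+1)*B)) = ((K+1)*(2*(2*K+1)*A))/((K+1)*(4*P*B))"
        by (simp add: algebra_simps)
      also have "\<dots> = (2*(2*K+1)*A)/(4*P*B)" using that by (intro mult_divide_mult_cancel_left) auto
      also have "\<dots> = 1/2*(2*K+1)*(A/(P*B))" using that by (simp add: field_simps)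
      finally show ?thesis .
    qed
    show ?thesis unfolding f1 f2 n
      using g[of "4^k" "fact k" "real k" "fact (2*k)"] by (simp add: algebra_simps)
  qed
  then show ?thesis using v0 v1 by simp
qed

lemma integrable_nu_cpow: "integrable nu (\<lambda>t. (complex_of_real t) ^ n)"
proof -
  have "integrable nu (\<lambda>t. complex_of_real (t ^ n))"
    using integrable_nu_pow by (rule integrable_of_real)
  then show ?thesis by simp
qed

lemma integral_nu_cpow: "integral\<^sup>L nu (\<lambda>t. (complex_of_real t) ^ n) = of_real (integral\<^sup>L nu (\<lambda>t. t ^ n))"
proof -
  have "integral\<^sup>L nu (\<lambda>t. (complex_of_real t) ^ n) = integral\<^sup>L nu (\<lambda>t. complex_of_real (t ^ n))"
    by simp
  also have "\<dots> = of_real (integral\<^sup>L nu (\<lambda>t. t ^ n))" by (rule integral_complex_of_real)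
  finally show ?thesis .
qed

lemma poly_sum_upto:
  assumes "degree P \<le> N"
  shows "poly (P :: complex poly) w = (\<Sum>i\<le>N. coeff P i * w ^ i)"
  unfolding poly_altdef
  by (rule sum.mono_neutral_left) (use assms in \<open>auto simp: coeff_eq_0\<close>)

lemma integrable_nu_poly: "integrable nu (\<lambda>t. poly (P :: complex poly) (of_real t))"
  unfolding poly_altdef by (intro Bochner_Integration.integrable_sum integrable_mult_right integrable_nu_cpow)

lemma stein_nu:
  fixes P :: "complex poly"
  shows "integral\<^sup>L nu (\<lambda>t. of_real t * poly P (of_real t))
       = 1/2 * integral\<^sup>L nu (\<lambda>t. poly (pderiv P) (of_real t))"
proof -
  define N where "N = degree P"
  define m where "m k = integral\<^sup>L nu (\<lambda>t. t ^ k)" for k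
  define f where "f i = coeff P i * of_real (1/2 * real i * m (i - 1))" for i
  have "integral\<^sup>L nu (\<lambda>t. of_real t * poly P (of_real t))
      = integral\<^sup>L nu (\<lambda>t. \<Sum>i\<le>N. coeff P i * (of_real t) ^ Suc i)"
    unfolding poly_altdef N_def by (simp add: sum_distrib_left algebra_simps)
  also have "\<dots> = (\<Sum>i\<le>N. coeff P i * integral\<^sup>L nu (\<lambda>t. (of_real t) ^ Suc i))"
    by (subst Bochner_Integration.integral_sum)
      (auto simp del: power_Suc intro!: integrable_nu_cpow integrable_mult_right)
  also have "\<dots> = (\<Sum>i\<le>N. f i)"
    unfolding f_def m_def integral_nu_cpow nu_moment_rec by simp
  also have "\<dots> = (\<Sum>i<N. f (Suc i))"
    by (subst sum.atMost_shift) (simp add: f_def)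
  also have "\<dots> = (\<Sum>i\<le>N. f (Suc i))"
    by (simp add: f_def N_def coeff_eq_0 lessThan_Suc_atMost[symmetric])
  also have "\<dots> = 1/2 * (\<Sum>i\<le>N. coeff (pderiv P) i * integral\<^sup>L nu (\<lambda>t. (of_real t) ^ i))"
    unfolding f_def m_def integral_nu_cpow coeff_pderiv sum_distrib_left
    by (intro sum.cong refl) (simp add: algebra_simps)
  also have "(\<Sum>i\<le>N. coeff (pderiv P) i * integral\<^sup>L nu (\<lambda>t. (of_real t) ^ i))
      = integral\<^sup>L nu (\<lambda>t. \<Sum>i\<le>N. coeff (pderiv P) i * (of_real t) ^ i)"
    by (subst Bochner_Integration.integral_sum) (auto intro!: integrable_nu_cpow)
  also have "\<dots> = integral\<^sup>L nu (\<lambda>t. poly (pderiv P) (of_real t))"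
    by (subst poly_sum_upto[where N=N]) (auto simp: N_def degree_pderiv)
  finally show ?thesis .
qed

abbreviation "SCN \<equiv> std_complex_normal"

lemma SCN_def': "SCN = distr (nu \<Otimes>\<^sub>M nu) borel (\<lambda>(a, b). Complex a b)"
  unfolding std_complex_normal_def nu_def ..

interpretation nu: prob_space nu by (rule prob_space_nu)
interpretation nunu: pair_prob_space nu nu ..

lemma measurable_Complex_pair[measurable]: "(\<lambda>(a, b). Complex a b) \<in> borel_measurable (nu \<Otimes>\<^sub>M nu)"
proof -
  have "(\<lambda>(a, b). Complex a b) = (\<lambda>p. complex_of_real (fst p) + \<i> * complex_of_real (snd p))"
    by (auto simp: fun_eq_iff complex_eq_iff)
  then show ?thesis by simp
qed

lemma prob_space_SCN: "prob_space SCN"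
  unfolding SCN_def' by (intro nunu.prob_space_distr) simp

lemma sets_SCN[measurable_cong, simp]: "sets SCN = sets borel"
  unfolding SCN_def' by simp

lemma space_SCN[simp]: "space SCN = UNIV"
  unfolding SCN_def' by simp

lemma integrable_SCN_iff:
  fixes f :: "complex \<Rightarrow> 'b::{banach, second_countable_topology}"
  assumes [measurable]: "f \<in> borel_measurable borel"
  shows "integrable SCN f \<longleftrightarrow> integrable (nu \<Otimes>\<^sub>M nu) (\<lambda>(a,b). f (Complex a b))"
  unfolding SCN_def' using integrable_distr_eq[of "\<lambda>(a,b). Complex a b" "nu \<Otimes>\<^sub>M nu" borel f]
  by (simp add: case_prod_beta')

lemma integral_SCN:
  fixes f :: "complex \<Rightarrow> 'b::{banach, second_countable_topology}"
  assumes [measurable]: "f \<in> borel_measurable borel"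
  shows "integral\<^sup>L SCN f = integral\<^sup>L (nu \<Otimes>\<^sub>M nu) (\<lambda>(a,b). f (Complex a b))"
  unfolding SCN_def' by (subst integral_distr) (auto simp: case_prod_beta')

lemma integrable_nu_1pabs: "integrable nu (\<lambda>t. (1 + \<bar>t\<bar>) ^ k)"
  unfolding binomial_ring
  by (intro Bochner_Integration.integrable_sum integrable_mult_right integrable_mult_left integrable_nu_abs_pow) 

lemma integrable_pair_fst:
  fixes g :: "real \<Rightarrow> 'b::{banach, second_countable_topology}"
  assumes "integrable nu g"
  shows "integrable (nu \<Otimes>\<^sub>M nu) (\<lambda>p. g (fst p))"
proof -
  have g[measurable]: "g \<in> borel_measurable nu" using assms by auto
  have "integrable (distr (nu \<Otimes>\<^sub>M nu) nu fst) g" using assms nu.distr_pair_fst[of nu] by simp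
  then show ?thesis using integrable_distr_eq[of fst "nu \<Otimes>\<^sub>M nu" nu g] by simp
qed

lemma integrable_pair_snd:
  fixes g :: "real \<Rightarrow> 'b::{banach, second_countable_topology}"
  assumes "integrable nu g"
  shows "integrable (nu \<Otimes>\<^sub>M nu) (\<lambda>p. g (snd p))"
proof -
  have "integrable (nu \<Otimes>\<^sub>M nu) (\<lambda>(x, y). g (fst (y, x)))"
    using nunu.integrable_product_swap_iff[of "\<lambda>p. g (fst p)"] integrable_pair_fst[OF assms]
    by (simp add: case_prod_beta')
  then show ?thesis by (simp add: case_prod_beta')
qed

lemma integrable_SCN_bound:
  fixes f :: "complex \<Rightarrow> 'b::{banach, second_countable_topology}"
  assumes [measurable]: "f \<in> borel_measurable borel"
    and b: "\<And>z. norm (f z) \<le> C * (1 + cmod z) ^ N"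
  shows "integrable SCN f"
proof -
  have int: "integrable (nu \<Otimes>\<^sub>M nu) (\<lambda>p. C * ((1 + \<bar>fst p\<bar>) ^ (2*N) + (1 + \<bar>snd p\<bar>) ^ (2*N)))"
    by (intro integrable_mult_right Bochner_Integration.integrable_add integrable_pair_fst integrable_pair_snd integrable_nu_1pabs)
  have "integrable (nu \<Otimes>\<^sub>M nu) (\<lambda>(a,b). f (Complex a b))"
  proof (rule Bochner_Integration.integrable_bound[OF int])
    show "AE p in nu \<Otimes>\<^sub>M nu. norm ((\<lambda>(a,b). f (Complex a b)) p) \<le> norm (C * ((1 + \<bar>fst p\<bar>) ^ (2*N) + (1 + \<bar>snd p\<bar>) ^ (2*N)))"
    proof (intro AE_I2, clarify)
      fix a b :: real
      have "norm (f 0) \<le> C" using b[of 0] by simp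
      then have C: "C \<ge> 0" using norm_ge_zero[of "f 0"] by linarith
      have c1: "cmod (Complex a b) \<le> \<bar>a\<bar> + \<bar>b\<bar>"
        using cmod_le[of "Complex a b"] by simp
      have "(1 + cmod (Complex a b)) ^ N \<le> ((1 + \<bar>a\<bar>) * (1 + \<bar>b\<bar>)) ^ N"
        by (rule power_mono) (use c1 in \<open>auto simp: algebra_simps intro!: order_trans[OF c1]\<close>)
      also have "\<dots> = (1 + \<bar>a\<bar>) ^ N * (1 + \<bar>b\<bar>) ^ N" by (simp add: power_mult_distrib)
      also have "\<dots> \<le> (1 + \<bar>a\<bar>) ^ (2*N) + (1 + \<bar>b\<bar>) ^ (2*N)"
      proof -
        have "2 * (X * Y) \<le> X\<^sup>2 + Y\<^sup>2" for X Y :: real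
          using zero_le_power2[of "X - Y"] by (simp add: power2_eq_square algebra_simps)
        then have "2 * ((1 + \<bar>a\<bar>) ^ N * (1 + \<bar>b\<bar>) ^ N) \<le> ((1 + \<bar>a\<bar>) ^ N)\<^sup>2 + ((1 + \<bar>b\<bar>) ^ N)\<^sup>2" .
        moreover have "0 \<le> (1 + \<bar>a\<bar>) ^ N * (1 + \<bar>b\<bar>) ^ N" by simp
        moreover have "((1 + \<bar>a\<bar>) ^ N)\<^sup>2 = (1 + \<bar>a\<bar>) ^ (2*N)" "((1 + \<bar>b\<bar>) ^ N)\<^sup>2 = (1 + \<bar>b\<bar>) ^ (2*N)"
          by (simp_all add: power_mult[symmetric] mult.commute)
        ultimately show ?thesis by linarith
      qed
      finally have "C * (1 + cmod (Complex a b)) ^ N \<le> C * ((1 + \<bar>a\<bar>) ^ (2*N) + (1 + \<bar>b\<bar>) ^ (2*N))"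
        using C by (intro mult_left_mono)
      then show "norm (f (Complex a b)) \<le> norm (C * ((1 + \<bar>fst (a, b)\<bar>) ^ (2*N) + (1 + \<bar>snd (a, b)\<bar>) ^ (2*N)))"
        using b[of "Complex a b"] C by simp
    qed
  qed simp
  then show ?thesis by (subst integrable_SCN_iff) auto
qed

definition hf :: "complex \<Rightarrow> complex \<Rightarrow> real \<Rightarrow> real \<Rightarrow> nat \<Rightarrow> nat \<Rightarrow> nat \<Rightarrow> nat \<Rightarrow> complex \<Rightarrow> complex" where
  "hf X Y xr yr n1 n2 n3 n4 z = (X + of_real xr * z) ^ n1 * (cnj X + of_real xr * cnj z) ^ n2
      * (Y + of_real yr * z) ^ n3 * (cnj Y + of_real yr * cnj z) ^ n4"

lemma hf_measurable[measurable]: "hf X Y xr yr n1 n2 n3 n4 \<in> borel_measurable borel"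
  unfolding hf_def by (intro borel_measurable_continuous_onI continuous_intros)

lemma hf_bound:
  "cmod (hf X Y xr yr n1 n2 n3 n4 z) \<le> (1 + cmod X + cmod Y + \<bar>xr\<bar> + \<bar>yr\<bar>) ^ (n1+n2+n3+n4) * (1 + cmod z) ^ (n1+n2+n3+n4)"
proof -
  define K where "K = 1 + cmod X + cmod Y + \<bar>xr\<bar> + \<bar>yr\<bar>"
  have K0: "0 \<le> K" unfolding K_def by simp
  have lin: "cmod (W + of_real r * w) \<le> K * (1 + cmod z)"
    if "cmod W \<le> cmod X + cmod Y" "\<bar>r\<bar> \<le> \<bar>xr\<bar> + \<bar>yr\<bar>" "cmod w = cmod z" for W w r
  proof -
    have "cmod (W + of_real r * w) \<le> cmod W + \<bar>r\<bar> * cmod z"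
      using norm_triangle_ineq[of W "of_real r * w"] that by (simp add: norm_mult)
    also have "\<dots> \<le> K * (1 + cmod z)"
    proof -
      have "\<bar>r\<bar> \<le> K" using that norm_ge_zero[of X] norm_ge_zero[of Y] unfolding K_def by linarith
      then have "\<bar>r\<bar> * cmod z \<le> K * cmod z"
        by (rule mult_right_mono) simp
      moreover have "cmod W \<le> K" using that by (simp add: K_def)
      ultimately show ?thesis by (simp add: algebra_simps)
    qed
    finally show ?thesis .
  qed
  have "cmod (hf X Y xr yr n1 n2 n3 n4 z) \<le> (K * (1 + cmod z)) ^ n1 * (K * (1 + cmod z)) ^ n2 * (K * (1 + cmod z)) ^ n3 * (K * (1 + cmod z)) ^ n4"
    unfolding hf_def norm_mult norm_power
    by (intro mult_mono power_mono lin) (auto simp: K0)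
  also have "\<dots> = K ^ (n1+n2+n3+n4) * (1 + cmod z) ^ (n1+n2+n3+n4)"
    by (simp only: power_add power_mult_distrib mult_ac)
  finally show ?thesis unfolding K_def .
qed

lemma integrable_SCN_hf: "integrable SCN (\<lambda>z. z ^ k * hf X Y xr yr n1 n2 n3 n4 z)"
proof (rule integrable_SCN_bound)
  fix z
  define K where "K = (1 + cmod X + cmod Y + \<bar>xr\<bar> + \<bar>yr\<bar>) ^ (n1+n2+n3+n4)"
  have "norm (z ^ k * hf X Y xr yr n1 n2 n3 n4 z) \<le> (1 + cmod z) ^ k * (K * (1 + cmod z) ^ (n1+n2+n3+n4))"
    unfolding norm_mult norm_power K_def by (intro mult_mono power_mono hf_bound) auto
  then show "norm (z ^ k * hf X Y xr yr n1 n2 n3 n4 z) \<le> K * (1 + cmod z) ^ (k + (n1+n2+n3+n4))"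
    by (simp add: power_add algebra_simps)
qed measurable

lemma pderiv_lin:
  fixes c d w :: complex
  shows "poly (pderiv ([:c, d:] ^ n)) w = of_nat n * d * (c + w * d) ^ (n - 1)"
  by (simp add: pderiv_power pderiv_pCons)

lemma pderiv_mult_poly:
  fixes P Q :: "complex poly"
  shows "poly (pderiv (P * Q)) w = poly P w * poly (pderiv Q) w + poly Q w * poly (pderiv P) w"
  by (simp add: pderiv_mult)

lemma pderiv_lin4:
  fixes c1 c2 c3 c4 d1 d2 d3 d4 w :: complex
  shows "poly (pderiv ([:c1, d1:] ^ n1 * [:c2, d2:] ^ n2 * [:c3, d3:] ^ n3 * [:c4, d4:] ^ n4)) w
    = of_nat n1 * d1 * (c1 + w * d1) ^ (n1 - 1) * (c2 + w * d2) ^ n2 * (c3 + w * d3) ^ n3 * (c4 + w * d4) ^ n4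
    + of_nat n2 * d2 * (c1 + w * d1) ^ n1 * (c2 + w * d2) ^ (n2 - 1) * (c3 + w * d3) ^ n3 * (c4 + w * d4) ^ n4
    + of_nat n3 * d3 * (c1 + w * d1) ^ n1 * (c2 + w * d2) ^ n2 * (c3 + w * d3) ^ (n3 - 1) * (c4 + w * d4) ^ n4
    + of_nat n4 * d4 * (c1 + w * d1) ^ n1 * (c2 + w * d2) ^ n2 * (c3 + w * d3) ^ n3 * (c4 + w * d4) ^ (n4 - 1)"
  unfolding pderiv_mult_poly pderiv_lin poly_mult poly_power poly_pCons poly_0
  by (simp add: algebra_simps)

lemma integrable_SCN_ghf:
  assumes [measurable]: "g \<in> borel_measurable borel" and b: "\<And>z. cmod (g z) \<le> (1 + cmod z) ^ k"
  shows "integrable SCN (\<lambda>z. g z * hf X Y xr yr n1 n2 n3 n4 z)"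
proof (rule integrable_SCN_bound)
  fix z
  define K where "K = (1 + cmod X + cmod Y + \<bar>xr\<bar> + \<bar>yr\<bar>) ^ (n1+n2+n3+n4)"
  have "norm (g z * hf X Y xr yr n1 n2 n3 n4 z) \<le> (1 + cmod z) ^ k * (K * (1 + cmod z) ^ (n1+n2+n3+n4))"
    unfolding norm_mult K_def by (intro mult_mono hf_bound b) auto
  then show "norm (g z * hf X Y xr yr n1 n2 n3 n4 z) \<le> K * (1 + cmod z) ^ (k + (n1+n2+n3+n4))"
    by (simp add: power_add algebra_simps)
qed measurable

lemma integrable_pair_ghf:
  assumes [measurable]: "g \<in> borel_measurable borel" and b: "\<And>z. cmod (g z) \<le> (1 + cmod z) ^ k"
  shows "integrable (nu \<Otimes>\<^sub>M nu) (\<lambda>(a,b). g (Complex a b) * hf X Y xr yr n1 n2 n3 n4 (Complex a b))"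
  using integrable_SCN_ghf[OF assms, of X Y xr yr n1 n2 n3 n4] by (subst (asm) integrable_SCN_iff) auto

lemma integrable_pair_hf0:
  "integrable (nu \<Otimes>\<^sub>M nu) (\<lambda>(a,b). hf X Y xr yr n1 n2 n3 n4 (Complex a b))"
  using integrable_pair_ghf[of "\<lambda>_. 1" 0 X Y xr yr n1 n2 n3 n4] by simp

lemma integrable_pair_hf_re:
  "integrable (nu \<Otimes>\<^sub>M nu) (\<lambda>(a,b). of_real a * hf X Y xr yr n1 n2 n3 n4 (Complex a b))"
  using integrable_pair_ghf[of "\<lambda>z. of_real (Re z)" 1 X Y xr yr n1 n2 n3 n4] abs_Re_le_cmod
  by (simp add: add_increasing)

lemma integrable_pair_hf_im:
  "integrable (nu \<Otimes>\<^sub>M nu) (\<lambda>(a,b). of_real b * hf X Y xr yr n1 n2 n3 n4 (Complex a b))"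
  using integrable_pair_ghf[of "\<lambda>z. of_real (Im z)" 1 X Y xr yr n1 n2 n3 n4] abs_Im_le_cmod
  by (simp add: add_increasing)

lemma hf_polyA:
  "hf X Y xr yr n1 n2 n3 n4 (Complex a b) =
   poly ([:X + \<i> * of_real (xr*b), of_real xr:] ^ n1 * [:cnj X - \<i> * of_real (xr*b), of_real xr:] ^ n2
       * [:Y + \<i> * of_real (yr*b), of_real yr:] ^ n3 * [:cnj Y - \<i> * of_real (yr*b), of_real yr:] ^ n4) (of_real a)"
  unfolding hf_def by (simp add: Complex_eq algebra_simps)

lemma hf_polyB:
  "hf X Y xr yr n1 n2 n3 n4 (Complex a b) =
   poly ([:X + of_real (xr*a), \<i> * of_real xr:] ^ n1 * [:cnj X + of_real (xr*a), - \<i> * of_real xr:] ^ n2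
       * [:Y + of_real (yr*a), \<i> * of_real yr:] ^ n3 * [:cnj Y + of_real (yr*a), - \<i> * of_real yr:] ^ n4) (of_real b)"
  unfolding hf_def by (simp add: Complex_eq algebra_simps)


definition "HA X Y xr yr n1 n2 n3 n4 b =
  [:X + \<i> * of_real (xr*b), of_real xr:] ^ n1 * [:cnj X - \<i> * of_real (xr*b), of_real xr:] ^ n2
       * [:Y + \<i> * of_real (yr*b), of_real yr:] ^ n3 * [:cnj Y - \<i> * of_real (yr*b), of_real yr:] ^ n4"

definition "HB X Y xr yr n1 n2 n3 n4 a =
  [:X + of_real (xr*a), \<i> * of_real xr:] ^ n1 * [:cnj X + of_real (xr*a), - \<i> * of_real xr:] ^ n2
       * [:Y + of_real (yr*a), \<i> * of_real yr:] ^ n3 * [:cnj Y + of_real (yr*a), - \<i> * of_real yr:] ^ n4"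

definition "DA X Y xr yr n1 n2 n3 n4 z =
  of_nat n1 * of_real xr * hf X Y xr yr (n1-1) n2 n3 n4 z + of_nat n2 * of_real xr * hf X Y xr yr n1 (n2-1) n3 n4 z
  + of_nat n3 * of_real yr * hf X Y xr yr n1 n2 (n3-1) n4 z + of_nat n4 * of_real yr * hf X Y xr yr n1 n2 n3 (n4-1) z"

definition "DB X Y xr yr n1 n2 n3 n4 z =
  \<i> * (of_nat n1 * of_real xr * hf X Y xr yr (n1-1) n2 n3 n4 z - of_nat n2 * of_real xr * hf X Y xr yr n1 (n2-1) n3 n4 z
  + of_nat n3 * of_real yr * hf X Y xr yr n1 n2 (n3-1) n4 z - of_nat n4 * of_real yr * hf X Y xr yr n1 n2 n3 (n4-1) z)"

lemma HA_deriv: "poly (pderiv (HA X Y xr yr n1 n2 n3 n4 b)) (of_real a) = DA X Y xr yr n1 n2 n3 n4 (Complex a b)"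
  unfolding HA_def pderiv_lin4 DA_def hf_def by (simp add: Complex_eq algebra_simps)

lemma HB_deriv: "poly (pderiv (HB X Y xr yr n1 n2 n3 n4 a)) (of_real b) = DB X Y xr yr n1 n2 n3 n4 (Complex a b)"
  unfolding HB_def pderiv_lin4 DB_def hf_def by (simp add: Complex_eq algebra_simps)

lemma integrable_pair_DA: "integrable (nu \<Otimes>\<^sub>M nu) (\<lambda>(a,b). DA X Y xr yr n1 n2 n3 n4 (Complex a b))"
  unfolding DA_def case_prod_beta'
  by (intro Bochner_Integration.integrable_add integrable_mult_right integrable_pair_hf0[unfolded case_prod_beta'])

lemma integrable_pair_DB: "integrable (nu \<Otimes>\<^sub>M nu) (\<lambda>(a,b). DB X Y xr yr n1 n2 n3 n4 (Complex a b))"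
  unfolding DB_def case_prod_beta'
  by (intro Bochner_Integration.integrable_add Bochner_Integration.integrable_diff integrable_mult_right integrable_pair_hf0[unfolded case_prod_beta'])

lemma stein_A:
  "integral\<^sup>L (nu \<Otimes>\<^sub>M nu) (\<lambda>(a,b). of_real a * hf X Y xr yr n1 n2 n3 n4 (Complex a b))
   = 1/2 * integral\<^sup>L (nu \<Otimes>\<^sub>M nu) (\<lambda>(a,b). DA X Y xr yr n1 n2 n3 n4 (Complex a b))"
proof -
  have "integral\<^sup>L (nu \<Otimes>\<^sub>M nu) (\<lambda>(a,b). of_real a * hf X Y xr yr n1 n2 n3 n4 (Complex a b))
      = (\<integral>b. (\<integral>a. of_real a * hf X Y xr yr n1 n2 n3 n4 (Complex a b) \<partial>nu) \<partial>nu)"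
    by (rule nunu.integral_snd[symmetric]) (rule integrable_pair_hf_re)
  also have "\<dots> = (\<integral>b. 1/2 * (\<integral>a. DA X Y xr yr n1 n2 n3 n4 (Complex a b) \<partial>nu) \<partial>nu)"
    by (intro Bochner_Integration.integral_cong refl)
       (simp add: hf_polyA[folded HA_def] stein_nu HA_deriv)
  also have "\<dots> = 1/2 * (\<integral>b. (\<integral>a. DA X Y xr yr n1 n2 n3 n4 (Complex a b) \<partial>nu) \<partial>nu)"
    by simp
  also have "(\<integral>b. (\<integral>a. DA X Y xr yr n1 n2 n3 n4 (Complex a b) \<partial>nu) \<partial>nu)
      = integral\<^sup>L (nu \<Otimes>\<^sub>M nu) (\<lambda>(a,b). DA X Y xr yr n1 n2 n3 n4 (Complex a b))"
    by (rule nunu.integral_snd) (rule integrable_pair_DA)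
  finally show ?thesis .
qed

lemma stein_B:
  "integral\<^sup>L (nu \<Otimes>\<^sub>M nu) (\<lambda>(a,b). of_real b * hf X Y xr yr n1 n2 n3 n4 (Complex a b))
   = 1/2 * integral\<^sup>L (nu \<Otimes>\<^sub>M nu) (\<lambda>(a,b). DB X Y xr yr n1 n2 n3 n4 (Complex a b))"
proof -
  have "integral\<^sup>L (nu \<Otimes>\<^sub>M nu) (\<lambda>(a,b). of_real b * hf X Y xr yr n1 n2 n3 n4 (Complex a b))
      = (\<integral>a. (\<integral>b. of_real b * hf X Y xr yr n1 n2 n3 n4 (Complex a b) \<partial>nu) \<partial>nu)"
    by (rule nunu.integral_fst[symmetric]) (rule integrable_pair_hf_im)
  also have "\<dots> = (\<integral>a. 1/2 * (\<integral>b. DB X Y xr yr n1 n2 n3 n4 (Complex a b) \<partial>nu) \<partial>nu)"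
    by (intro Bochner_Integration.integral_cong refl)
       (simp add: hf_polyB[folded HB_def] stein_nu HB_deriv)
  also have "\<dots> = 1/2 * (\<integral>a. (\<integral>b. DB X Y xr yr n1 n2 n3 n4 (Complex a b) \<partial>nu) \<partial>nu)"
    by simp
  also have "(\<integral>a. (\<integral>b. DB X Y xr yr n1 n2 n3 n4 (Complex a b) \<partial>nu) \<partial>nu)
      = integral\<^sup>L (nu \<Otimes>\<^sub>M nu) (\<lambda>(a,b). DB X Y xr yr n1 n2 n3 n4 (Complex a b))"
    by (rule nunu.integral_fst) (rule integrable_pair_DB)
  finally show ?thesis .
qed


lemma DA_DB: "(DA X Y xr yr n1 n2 n3 n4 z + \<i> * DB X Y xr yr n1 n2 n3 n4 z) / 2
  = of_nat n2 * of_real xr * hf X Y xr yr n1 (n2-1) n3 n4 z + of_nat n4 * of_real yr * hf X Y xr yr n1 n2 n3 (n4-1) z"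
  unfolding DA_def DB_def by (simp add: algebra_simps)

lemma stein_SCN:
  "integral\<^sup>L SCN (\<lambda>z. z * hf X Y xr yr n1 n2 n3 n4 z)
   = integral\<^sup>L SCN (\<lambda>z. of_nat n2 * of_real xr * hf X Y xr yr n1 (n2-1) n3 n4 z
                      + of_nat n4 * of_real yr * hf X Y xr yr n1 n2 n3 (n4-1) z)"
proof -
  let ?F = "hf X Y xr yr n1 n2 n3 n4"
  let ?DA = "DA X Y xr yr n1 n2 n3 n4"
  let ?DB = "DB X Y xr yr n1 n2 n3 n4"
  have mA: "?DA \<in> borel_measurable borel" unfolding DA_def by measurable
  have mB: "?DB \<in> borel_measurable borel" unfolding DB_def by measurable
  have "integral\<^sup>L SCN (\<lambda>z. z * ?F z) = integral\<^sup>L (nu \<Otimes>\<^sub>M nu) (\<lambda>(a,b). Complex a b * ?F (Complex a b))"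
    by (rule integral_SCN) measurable
  also have "\<dots> = integral\<^sup>L (nu \<Otimes>\<^sub>M nu) (\<lambda>p. (\<lambda>(a,b). of_real a * ?F (Complex a b)) p
                      + \<i> * (\<lambda>(a,b). of_real b * ?F (Complex a b)) p)"
    by (intro Bochner_Integration.integral_cong refl) (auto simp: Complex_eq algebra_simps)
  also have "\<dots> = integral\<^sup>L (nu \<Otimes>\<^sub>M nu) (\<lambda>(a,b). of_real a * ?F (Complex a b))
                 + \<i> * integral\<^sup>L (nu \<Otimes>\<^sub>M nu) (\<lambda>(a,b). of_real b * ?F (Complex a b))"
    by (subst Bochner_Integration.integral_add) (auto intro!: integrable_pair_hf_re integrable_pair_hf_im integrable_mult_right)
  also have "\<dots> = 1/2 * integral\<^sup>L (nu \<Otimes>\<^sub>M nu) (\<lambda>(a,b). ?DA (Complex a b))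
                 + \<i> * (1/2 * integral\<^sup>L (nu \<Otimes>\<^sub>M nu) (\<lambda>(a,b). ?DB (Complex a b)))"
    unfolding stein_A stein_B ..
  also have "\<dots> = integral\<^sup>L (nu \<Otimes>\<^sub>M nu) (\<lambda>p. ((\<lambda>(a,b). ?DA (Complex a b)) p + \<i> * (\<lambda>(a,b). ?DB (Complex a b)) p) / 2)"
    by (subst integral_divide_zero, subst Bochner_Integration.integral_add)
       (auto intro!: integrable_pair_DA integrable_pair_DB integrable_mult_right)
  also have "\<dots> = integral\<^sup>L (nu \<Otimes>\<^sub>M nu) (\<lambda>(a,b). (\<lambda>z. of_nat n2 * of_real xr * hf X Y xr yr n1 (n2-1) n3 n4 z
                      + of_nat n4 * of_real yr * hf X Y xr yr n1 n2 n3 (n4-1) z) (Complex a b))"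
    by (intro Bochner_Integration.integral_cong refl) (auto simp only: DA_DB split: prod.splits)
  also have "\<dots> = integral\<^sup>L SCN (\<lambda>z. of_nat n2 * of_real xr * hf X Y xr yr n1 (n2-1) n3 n4 z
                      + of_nat n4 * of_real yr * hf X Y xr yr n1 n2 n3 (n4-1) z)"
    by (rule integral_SCN[symmetric]) measurable
  finally show ?thesis .
qed

interpretation SCNP: product_sigma_finite "\<lambda>_. SCN"
  using prob_space_imp_sigma_finite[OF prob_space_SCN] unfolding product_sigma_finite_def by simp

lemma prob_space_Pd: "prob_space (PiM I (\<lambda>_. SCN))"
  by (intro prob_space_PiM prob_space_SCN)

definition G :: "real ^ 'd \<Rightarrow> real ^ 'd \<Rightarrow> nat \<Rightarrow> nat \<Rightarrow> nat \<Rightarrow> nat \<Rightarrow> ('d \<Rightarrow> complex) \<Rightarrow> complex" where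
  "G x y n1 n2 n3 n4 v = (rc_dot x v) ^ n1 * (cnj (rc_dot x v)) ^ n2 * (rc_dot y v) ^ n3 * (cnj (rc_dot y v)) ^ n4"

lemma one_plus_sum_le_prod:
  assumes "finite I" "\<And>i. i \<in> I \<Longrightarrow> (0::real) \<le> t i"
  shows "1 + (\<Sum>i\<in>I. t i) \<le> (\<Prod>i\<in>I. 1 + t i)"
  using assms
proof (induction I rule: finite_induct)
  case (insert i I)
  have "1 + (\<Sum>i\<in>insert i I. t i) = t i + (1 + (\<Sum>i\<in>I. t i))" using insert by simp
  also have "\<dots> \<le> t i * (\<Prod>i\<in>I. 1 + t i) + (\<Prod>i\<in>I. 1 + t i)"
  proof -
    have "1 \<le> (\<Prod>i\<in>I. 1 + t i)"
      using insert by (intro prod_ge_1) auto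
    then have "t i \<le> t i * (\<Prod>i\<in>I. 1 + t i)"
      using insert mult_left_mono[of 1 "\<Prod>i\<in>I. 1 + t i" "t i"] by simp
    then show ?thesis using insert by simp
  qed
  also have "\<dots> = (\<Prod>i\<in>insert i I. 1 + t i)" using insert by (simp add: algebra_simps)
  finally show ?case .
qed simp

lemma rc_dot_measurable[measurable]:
  "rc_dot x \<in> borel_measurable (PiM UNIV (\<lambda>_::'d::finite. SCN))"
  unfolding rc_dot_def by measurable

lemma integrable_Pd_bound:
  fixes f :: "('d::finite \<Rightarrow> complex) \<Rightarrow> 'b::{banach, second_countable_topology}"
  assumes [measurable]: "f \<in> borel_measurable (PiM UNIV (\<lambda>_. SCN))"
    and b: "\<And>v. norm (f v) \<le> C * (1 + (\<Sum>j\<in>UNIV. cmod (v j))) ^ N"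
  shows "integrable (PiM UNIV (\<lambda>_. SCN)) f"
proof -
  have int: "integrable (PiM UNIV (\<lambda>_. SCN)) (\<lambda>v::'d \<Rightarrow> complex. C * (\<Prod>j\<in>UNIV. (1 + cmod (v j)) ^ N))"
    by (intro integrable_mult_right SCNP.product_integrable_prod) (auto intro!: integrable_SCN_bound[where C=1 and N=N] simp: finite_UNIV)
  show ?thesis
  proof (rule Bochner_Integration.integrable_bound[OF int])
    show "AE v in PiM UNIV (\<lambda>_. SCN). norm (f v) \<le> norm (C * (\<Prod>j\<in>UNIV. (1 + cmod (v j)) ^ N))"
    proof (intro AE_I2)
      fix v :: "'d \<Rightarrow> complex"
      have "norm (f (\<lambda>_. 0)) \<le> C" using b[of "\<lambda>_. 0"] by simp
      then have C: "C \<ge> 0" using norm_ge_zero[of "f (\<lambda>_. 0)"] by linarith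
      have "(1 + (\<Sum>j\<in>UNIV. cmod (v j))) ^ N \<le> (\<Prod>j\<in>UNIV. 1 + cmod (v j)) ^ N"
      proof (intro power_mono one_plus_sum_le_prod)
        have "0 \<le> (\<Sum>j\<in>UNIV. cmod (v j))" by (intro sum_nonneg) auto
        then show "0 \<le> 1 + (\<Sum>j\<in>UNIV. cmod (v j))" by simp
      qed auto
      also have "\<dots> = (\<Prod>j\<in>UNIV. (1 + cmod (v j)) ^ N)" by (simp add: prod_power_distrib)
      finally have "C * (1 + (\<Sum>j\<in>UNIV. cmod (v j))) ^ N \<le> C * (\<Prod>j\<in>UNIV. (1 + cmod (v j)) ^ N)"
        using C by (intro mult_left_mono)
      moreover have "0 \<le> (\<Prod>j\<in>UNIV. (1 + cmod (v j)) ^ N)" by (intro prod_nonneg) auto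
      ultimately show "norm (f v) \<le> norm (C * (\<Prod>j\<in>UNIV. (1 + cmod (v j)) ^ N))"
        using b[of v] C by simp
    qed
  qed simp
qed

lemma cnj_measurable[measurable]: "cnj \<in> borel_measurable borel"
  by (intro borel_measurable_continuous_onI continuous_intros)

lemma G_measurable[measurable]: "G x y n1 n2 n3 n4 \<in> borel_measurable (PiM UNIV (\<lambda>_::'d::finite. SCN))"
  unfolding G_def by measurable

lemma rc_dot_bound:
  fixes x :: "real ^ 'd::finite"
  assumes "(\<Sum>j\<in>UNIV. \<bar>x $ j\<bar>) \<le> K"
  shows "cmod (rc_dot x v) \<le> K * (1 + (\<Sum>j\<in>UNIV. cmod (v j)))"
proof -
  have "cmod (rc_dot x v) \<le> (\<Sum>j\<in>UNIV. \<bar>x $ j\<bar> * cmod (v j))"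
    unfolding rc_dot_def by (rule order_trans[OF norm_sum]) (simp add: norm_mult)
  also have "\<dots> \<le> (\<Sum>j\<in>UNIV. K * cmod (v j))"
  proof (intro sum_mono mult_right_mono)
    fix j
    have "\<bar>x $ j\<bar> \<le> (\<Sum>j\<in>UNIV. \<bar>x $ j\<bar>)"
      by (rule member_le_sum) auto
    then show "\<bar>x $ j\<bar> \<le> K" using assms by simp
  qed simp
  also have "\<dots> \<le> K * (1 + (\<Sum>j\<in>UNIV. cmod (v j)))"
  proof -
    have "0 \<le> (\<Sum>j\<in>UNIV. \<bar>x $ j\<bar>)" by (intro sum_nonneg) auto
    then have "0 \<le> K" using assms by linarith
    then show ?thesis by (simp add: sum_distrib_left[symmetric] algebra_simps)
  qed
  finally show ?thesis .
qed

lemma integrable_Pd_gG: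
  fixes x y :: "real ^ 'd::finite"
  assumes [measurable]: "g \<in> borel_measurable (PiM UNIV (\<lambda>_::'d. SCN))"
    and b: "\<And>v. cmod (g v) \<le> (1 + (\<Sum>j\<in>UNIV. cmod (v j))) ^ k"
  shows "integrable (PiM UNIV (\<lambda>_::'d. SCN)) (\<lambda>v. g v * G x y n1 n2 n3 n4 v)"
proof (rule integrable_Pd_bound)
  fix v :: "'d \<Rightarrow> complex"
  define K where "K = 1 + (\<Sum>j\<in>UNIV. \<bar>x $ j\<bar>) + (\<Sum>j\<in>UNIV. \<bar>y $ j\<bar>)"
  define S where "S = 1 + (\<Sum>j\<in>UNIV. cmod (v j))"
  have K0: "0 \<le> K" unfolding K_def by (intro add_nonneg_nonneg sum_nonneg) auto
  have S0: "0 \<le> S" unfolding S_def by (intro add_nonneg_nonneg sum_nonneg) auto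
  have sx: "0 \<le> (\<Sum>j\<in>UNIV. \<bar>x $ j\<bar>)" "0 \<le> (\<Sum>j\<in>UNIV. \<bar>y $ j\<bar>)" by (intro sum_nonneg; simp)+
  have bx: "cmod (rc_dot x v) \<le> K * S" unfolding S_def
    by (rule rc_dot_bound) (use sx in \<open>simp add: K_def\<close>)
  have by': "cmod (rc_dot y v) \<le> K * S" unfolding S_def
    by (rule rc_dot_bound) (use sx in \<open>simp add: K_def\<close>)
  have "cmod (g v * G x y n1 n2 n3 n4 v) \<le> S ^ k * ((K * S) ^ n1 * (K * S) ^ n2 * (K * S) ^ n3 * (K * S) ^ n4)"
    unfolding G_def norm_mult norm_power complex_mod_cnj
    by (intro mult_mono power_mono bx by' b[of v, folded S_def]) (auto simp: K0 S0)
  also have "\<dots> = K ^ (n1+n2+n3+n4) * S ^ (k + (n1+n2+n3+n4))"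
    by (simp only: power_add power_mult_distrib mult_ac)
  finally show "norm (g v * G x y n1 n2 n3 n4 v) \<le> K ^ (n1+n2+n3+n4) * (1 + (\<Sum>j\<in>UNIV. cmod (v j))) ^ (k + (n1+n2+n3+n4))"
    unfolding S_def by simp
qed measurable

lemma integrable_Pd_G: "integrable (PiM UNIV (\<lambda>_::'d::finite. SCN)) (G x y n1 n2 n3 n4)"
  using integrable_Pd_gG[of "\<lambda>_. 1" 0 x y n1 n2 n3 n4] by simp

lemma integrable_Pd_compG: "integrable (PiM UNIV (\<lambda>_::'d::finite. SCN)) (\<lambda>v. v j * G x y n1 n2 n3 n4 v)"
proof (rule integrable_Pd_gG[where k=1])
  fix v :: "'d \<Rightarrow> complex"
  have "cmod (v j) \<le> (\<Sum>j\<in>UNIV. cmod (v j))" by (rule member_le_sum) auto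
  then show "cmod (v j) \<le> (1 + (\<Sum>j\<in>UNIV. cmod (v j))) ^ 1" by simp
qed measurable

lemma rc_dot_upd: "rc_dot x (w(j:=z)) = rc_dot x (w(j:=0)) + of_real (x $ j) * z"
proof -
  have "rc_dot x (w(j:=z)) = of_real (x $ j) * z + (\<Sum>k\<in>UNIV - {j}. of_real (x $ k) * (w(j:=z)) k)"
    unfolding rc_dot_def by (subst sum.remove[of _ j]) auto
  moreover have "rc_dot x (w(j:=0)) = (\<Sum>k\<in>UNIV - {j}. of_real (x $ k) * (w(j:=0)) k)"
    unfolding rc_dot_def by (subst sum.remove[of _ j]) auto
  moreover have "(\<Sum>k\<in>UNIV - {j}. of_real (x $ k) * (w(j:=z)) k) = (\<Sum>k\<in>UNIV - {j}. of_real (x $ k) * (w(j:=0)) k)"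
    by (intro sum.cong) auto
  ultimately show ?thesis by simp
qed

lemma G_upd: "G x y n1 n2 n3 n4 (w(j:=z)) = hf (rc_dot x (w(j:=0))) (rc_dot y (w(j:=0))) (x $ j) (y $ j) n1 n2 n3 n4 z"
  unfolding G_def hf_def
  by (subst (1 2) rc_dot_upd, subst (1 2) rc_dot_upd) simp

lemma Pd_insert:
  fixes f :: "('d::finite \<Rightarrow> complex) \<Rightarrow> complex"
  assumes "integrable (PiM UNIV (\<lambda>_::'d. SCN)) f"
  shows "integral\<^sup>L (PiM UNIV (\<lambda>_::'d. SCN)) f = (\<integral>w. (\<integral>z. f (w(j:=z)) \<partial>SCN) \<partial>PiM (UNIV - {j}) (\<lambda>_. SCN))"
proof -
  have U: "insert j (UNIV - {j}) = (UNIV :: 'd set)" by auto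
  show ?thesis
    using SCNP.product_integral_insert[of "UNIV - {j}" j f] assms unfolding U by simp
qed

lemma stein_Pd:
  fixes x y :: "real ^ 'd::finite"
  shows "integral\<^sup>L (PiM UNIV (\<lambda>_::'d. SCN)) (\<lambda>v. v j * G x y n1 n2 n3 n4 v)
    = of_nat n2 * of_real (x $ j) * integral\<^sup>L (PiM UNIV (\<lambda>_::'d. SCN)) (G x y n1 (n2-1) n3 n4)
    + of_nat n4 * of_real (y $ j) * integral\<^sup>L (PiM UNIV (\<lambda>_::'d. SCN)) (G x y n1 n2 n3 (n4-1))"
proof -
  let ?P = "PiM UNIV (\<lambda>_::'d. SCN)"
  let ?F = "\<lambda>v. of_nat n2 * of_real (x $ j) * G x y n1 (n2-1) n3 n4 v + of_nat n4 * of_real (y $ j) * G x y n1 n2 n3 (n4-1) v"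
  have intF: "integrable ?P ?F"
    by (intro Bochner_Integration.integrable_add integrable_mult_right integrable_Pd_G)
  have "integral\<^sup>L ?P (\<lambda>v. v j * G x y n1 n2 n3 n4 v)
      = (\<integral>w. (\<integral>z. (w(j:=z)) j * G x y n1 n2 n3 n4 (w(j:=z)) \<partial>SCN) \<partial>PiM (UNIV - {j}) (\<lambda>_. SCN))"
    by (rule Pd_insert) (rule integrable_Pd_compG)
  also have "\<dots> = (\<integral>w. (\<integral>z. ?F (w(j:=z)) \<partial>SCN) \<partial>PiM (UNIV - {j}) (\<lambda>_. SCN))"
    by (rule Bochner_Integration.integral_cong[OF refl]) (simp add: G_upd stein_SCN)
  also have "\<dots> = integral\<^sup>L ?P ?F"
    by (rule Pd_insert[symmetric]) (rule intF)
  also have "\<dots> = of_nat n2 * of_real (x $ j) * integral\<^sup>L ?P (G x y n1 (n2-1) n3 n4)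
    + of_nat n4 * of_real (y $ j) * integral\<^sup>L ?P (G x y n1 n2 n3 (n4-1))"
    by (subst Bochner_Integration.integral_add) (auto intro!: integrable_mult_right integrable_Pd_G)
  finally show ?thesis .
qed

definition mom :: "real ^ 'd::finite \<Rightarrow> real ^ 'd \<Rightarrow> nat \<Rightarrow> nat \<Rightarrow> nat \<Rightarrow> nat \<Rightarrow> complex" where
  "mom x y n1 n2 n3 n4 = integral\<^sup>L (PiM UNIV (\<lambda>_::'d. SCN)) (G x y n1 n2 n3 n4)"

lemma mom_rec1:
  fixes x y :: "real ^ 'd::finite"
  shows "mom x y (Suc n1) n2 n3 n4 = of_nat n2 * of_real (x \<bullet> x) * mom x y n1 (n2-1) n3 n4
                                    + of_nat n4 * of_real (x \<bullet> y) * mom x y n1 n2 n3 (n4-1)"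
proof -
  let ?P = "PiM UNIV (\<lambda>_::'d. SCN)"
  have "mom x y (Suc n1) n2 n3 n4 = integral\<^sup>L ?P (\<lambda>v. \<Sum>j\<in>UNIV. of_real (x $ j) * (v j * G x y n1 n2 n3 n4 v))"
  proof (unfold mom_def, rule Bochner_Integration.integral_cong[OF refl])
    fix v :: "'d \<Rightarrow> complex"
    have "G x y (Suc n1) n2 n3 n4 v = rc_dot x v * G x y n1 n2 n3 n4 v" by (simp add: G_def)
    also have "\<dots> = (\<Sum>j\<in>UNIV. of_real (x $ j) * (v j * G x y n1 n2 n3 n4 v))"
      unfolding rc_dot_def sum_distrib_right by (simp add: mult_ac)
    finally show "G x y (Suc n1) n2 n3 n4 v = (\<Sum>j\<in>UNIV. of_real (x $ j) * (v j * G x y n1 n2 n3 n4 v))" .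
  qed
  also have "\<dots> = (\<Sum>j\<in>UNIV. of_real (x $ j) * integral\<^sup>L ?P (\<lambda>v. v j * G x y n1 n2 n3 n4 v))"
    by (subst Bochner_Integration.integral_sum) (auto intro!: integrable_mult_right integrable_Pd_compG)
  also have "\<dots> = (\<Sum>j\<in>UNIV. of_real (x $ j) * (of_nat n2 * of_real (x $ j) * mom x y n1 (n2-1) n3 n4
                                   + of_nat n4 * of_real (y $ j) * mom x y n1 n2 n3 (n4-1)))"
    unfolding stein_Pd mom_def ..
  also have "\<dots> = of_nat n2 * of_real (x \<bullet> x) * mom x y n1 (n2-1) n3 n4 + of_nat n4 * of_real (x \<bullet> y) * mom x y n1 n2 n3 (n4-1)"
    unfolding inner_vec_def by (simp add: sum.distrib sum_distrib_left sum_distrib_right algebra_simps)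
  finally show ?thesis .
qed

lemma mom_swap: "mom x y n1 n2 n3 n4 = mom y x n3 n4 n1 n2"
  unfolding mom_def G_def by (simp add: mult_ac)

lemma mom_cnj: "mom x y n1 n2 n3 n4 = cnj (mom x y n2 n1 n4 n3)"
proof -
  have "cnj (mom x y n2 n1 n4 n3) = integral\<^sup>L (PiM UNIV (\<lambda>_. SCN)) (\<lambda>v. cnj (G x y n2 n1 n4 n3 v))"
    unfolding mom_def by (rule Bochner_Integration.integral_cnj[symmetric])
  also have "\<dots> = mom x y n1 n2 n3 n4"
    unfolding mom_def by (intro Bochner_Integration.integral_cong refl) (simp add: G_def mult_ac)
  finally show ?thesis by simp
qed

lemma mom_0:
  fixes x y :: "real ^ 'd::finite"
  shows "mom x y 0 0 0 0 = 1"
proof -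
  show ?thesis unfolding mom_def G_def using prob_space.prob_space[OF prob_space_Pd, of "UNIV :: 'd set"] by simp
qed

definition ff :: "nat \<Rightarrow> nat \<Rightarrow> complex" where
  "ff w n = (\<Prod>i<n. of_nat w - of_nat i)"

lemma ff_0[simp]: "ff w 0 = 1" by (simp add: ff_def)

lemma ff_Suc: "ff w (Suc n) = of_nat w * ff (w - 1) n"
proof -
  have "ff w (Suc n) = (of_nat w - of_nat 0) * (\<Prod>i<n. of_nat w - of_nat (Suc i))"
    unfolding ff_def by (rule prod.lessThan_Suc_shift)
  also have "(\<Prod>i<n. of_nat w - of_nat (Suc i) :: complex) = ff (w - 1) n" if "w > 0"
    unfolding ff_def using that by (intro prod.cong refl) (simp add: of_nat_diff)
  ultimately show ?thesis by (cases "w = 0") auto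
qed

lemma ff_fact: "n \<le> w \<Longrightarrow> ff w n * fact (w - n) = fact w"
proof (induction n arbitrary: w)
  case (Suc n)
  then obtain w' where w: "w = Suc w'" by (cases w) auto
  have "ff w (Suc n) * fact (w - Suc n) = of_nat w * (ff w' n * fact (w' - n))"
    by (simp add: ff_Suc w)
  also have "\<dots> = of_nat w * fact w'" using Suc.IH[of w'] Suc.prems w by simp
  also have "\<dots> = fact w" by (simp add: w fact_Suc)
  finally show ?case .
qed simp

definition TT :: "complex \<Rightarrow> complex \<Rightarrow> complex \<Rightarrow> nat \<Rightarrow> nat \<Rightarrow> nat \<Rightarrow> nat \<Rightarrow> complex" where
  "TT X Y c p q w k = of_nat (p choose k) * of_nat (q choose k) * fact k * ff w (p - k)
      * X ^ k * c ^ ((p - k) + (q - k)) * Y ^ (w - (p - k))"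

definition FF :: "complex \<Rightarrow> complex \<Rightarrow> complex \<Rightarrow> nat \<Rightarrow> nat \<Rightarrow> nat \<Rightarrow> complex" where
  "FF X Y c p q w = (\<Sum>k\<le>p. TT X Y c p q w k)"

lemma binom_fact_aux: "of_nat q * of_nat ((q - 1) choose k) * (fact k :: complex) = of_nat (q choose Suc k) * fact (Suc k)"
proof -
  have n: "q * ((q - 1) choose k) = (q choose Suc k) * Suc k"
  proof (cases q)
    case (Suc q')
    then show ?thesis by (simp only: diff_Suc_1 Suc_times_binomial_eq)
  qed simp
  have "(of_nat q * of_nat ((q - 1) choose k) :: complex) = of_nat (q choose Suc k) * of_nat (Suc k)"
    by (metis n of_nat_mult)
  then have "of_nat q * of_nat ((q - 1) choose k) * (fact k :: complex) = of_nat (q choose Suc k) * (of_nat (Suc k) * fact k)"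
    by (simp only: mult.assoc[symmetric])
  then show ?thesis unfolding fact_Suc .
qed

lemma TT_Suc:
  assumes "k \<le> Suc p"
  shows "TT X Y c (Suc p) q w k = (if k = 0 then 0 else of_nat q * X * TT X Y c p (q-1) w (k-1))
      + (if k \<le> p then of_nat w * c * TT X Y c p q (w-1) k else 0)"
proof (cases k)
  case 0
  have e: "w - Suc p = w - 1 - p" by simp
  have "TT X Y c (Suc p) q w k = of_nat w * c * (ff (w - 1) p * c ^ (p + q) * Y ^ (w - 1 - p))"
    unfolding TT_def 0 by (simp only: e binomial_n_0 fact_0 of_nat_1 mult_1 mult_1_right power_0 diff_zero ff_Suc add_Suc power_Suc mult_ac)
  moreover have "TT X Y c p q (w-1) 0 = ff (w - 1) p * c ^ (p + q) * Y ^ (w - 1 - p)"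
    unfolding TT_def by (simp only: binomial_n_0 fact_0 of_nat_1 mult_1 mult_1_right power_0 diff_zero)
  ultimately show ?thesis using 0 by simp
next
  case (Suc k')
  show ?thesis
  proof (cases "k' = p")
    case True
    have e: "q - Suc p = q - 1 - p" by simp
    have "TT X Y c (Suc p) q w k = (of_nat q * of_nat ((q - 1) choose p) * fact p) * X ^ Suc p * c ^ (q - 1 - p) * Y ^ w"
      unfolding TT_def Suc True binom_fact_aux
      by (simp only: e binomial_n_n diff_self_eq_0 of_nat_1 mult_1 mult_1_right ff_0 add_0 diff_zero)
    also have "\<dots> = of_nat q * X * TT X Y c p (q-1) w p"
      unfolding TT_def
      by (simp only: binomial_n_n diff_self_eq_0 of_nat_1 mult_1 mult_1_right ff_0 add_0 diff_zero power_Suc mult_ac)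
    finally show ?thesis using Suc True by simp
  next
    case False
    with assms Suc have kp: "k' < p" by simp
    have e1: "p - k' = Suc (p - Suc k')" using kp by simp
    have e2: "w - (p - k') = w - 1 - (p - Suc k')" using kp by simp
    have e3: "q - 1 - k' = q - Suc k'" by simp
    define Q where "Q = of_nat (q choose Suc k') * fact (Suc k') * of_nat w * ff (w - 1) (p - Suc k')
       * X ^ Suc k' * c ^ (Suc (p - Suc k') + (q - Suc k')) * Y ^ (w - 1 - (p - Suc k'))"
    have L: "TT X Y c (Suc p) q w k = (of_nat (p choose k') + of_nat (p choose Suc k')) * Q"
      unfolding TT_def Suc Q_def diff_Suc_Suc e1 ff_Suc binomial_Suc_Suc of_nat_add
      by (simp only: mult_ac diff_Suc_eq_diff_pred)
    have A: "of_nat q * X * TT X Y c p (q-1) w k' = of_nat (p choose k') * Q"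
    proof -
      have "of_nat q * X * TT X Y c p (q-1) w k' = of_nat (p choose k') * (of_nat q * of_nat ((q - 1) choose k') * fact k')
         * (of_nat w * ff (w - 1) (p - Suc k')) * (X * X ^ k') * c ^ (Suc (p - Suc k') + (q - Suc k')) * Y ^ (w - 1 - (p - Suc k'))"
        unfolding TT_def e1 e3 ff_Suc by (simp only: mult_ac diff_Suc_eq_diff_pred)
      also have "\<dots> = of_nat (p choose k') * Q"
        unfolding binom_fact_aux Q_def by (simp only: mult_ac power_Suc)
      finally show ?thesis .
    qed
    have B': "of_nat w * c * TT X Y c p q (w-1) k = of_nat (p choose Suc k') * Q"
      unfolding TT_def Suc Q_def by (simp only: mult_ac power_Suc add_Suc)
    have "TT X Y c (Suc p) q w k = of_nat q * X * TT X Y c p (q-1) w k' + of_nat w * c * TT X Y c p q (w-1) k"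
      unfolding L A B' by (simp add: algebra_simps)
    then show ?thesis using kp Suc by simp
  qed
qed

lemma FF_Suc: "FF X Y c (Suc p) q w = of_nat q * X * FF X Y c p (q-1) w + of_nat w * c * FF X Y c p q (w-1)"
proof -
  have "FF X Y c (Suc p) q w = (\<Sum>k\<le>Suc p. (if k = 0 then 0 else of_nat q * X * TT X Y c p (q-1) w (k-1)))
      + (\<Sum>k\<le>Suc p. (if k \<le> p then of_nat w * c * TT X Y c p q (w-1) k else 0))"
    unfolding FF_def sum.distrib[symmetric] by (intro sum.cong refl TT_Suc) simp
  also have "(\<Sum>k\<le>Suc p. (if k = 0 then 0 else of_nat q * X * TT X Y c p (q-1) w (k-1)))
      = of_nat q * X * FF X Y c p (q-1) w"
    unfolding FF_def by (subst sum.atMost_Suc_shift) (simp add: sum_distrib_left)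
  also have "(\<Sum>k\<le>Suc p. (if k \<le> p then of_nat w * c * TT X Y c p q (w-1) k else 0))
      = of_nat w * c * FF X Y c p q (w-1)"
    unfolding FF_def by (simp add: sum_distrib_left)
  finally show ?thesis .
qed

context
  fixes m :: "nat \<Rightarrow> nat \<Rightarrow> nat \<Rightarrow> nat \<Rightarrow> complex" and X Y c :: complex
  assumes R1: "\<And>p q r w. m (Suc p) q r w = of_nat q * X * m p (q-1) r w + of_nat w * c * m p q r (w-1)"
    and R2: "\<And>p q r w. m p q (Suc r) w = of_nat q * c * m p (q-1) r w + of_nat w * Y * m p q r (w-1)"
    and Cj: "\<And>p q r w. m p q r w = cnj (m q p w r)"
    and B: "m 0 0 0 0 = 1"
begin

lemma mZ: "q + w > 0 \<Longrightarrow> m 0 q 0 w = 0"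
proof -
  assume "q + w > 0"
  have "m q 0 w 0 = 0"
  proof (cases q)
    case (Suc q') then show ?thesis by (simp add: R1)
  next
    case 0
    with \<open>q + w > 0\<close> obtain w' where "w = Suc w'" by (cases w) auto
    then show ?thesis using 0 by (simp add: R2)
  qed
  then show ?thesis by (subst Cj) simp
qed

lemma mD0: "q + w = r \<Longrightarrow> m 0 q r w = fact r * c ^ q * Y ^ w"
proof (induction r arbitrary: q w)
  case 0
  then show ?case using B by simp
next
  case (Suc r)
  have "m 0 q (Suc r) w = of_nat q * c * m 0 (q-1) r w + of_nat w * Y * m 0 q r (w-1)" by (rule R2)
  also have "of_nat q * c * m 0 (q-1) r w = of_nat q * (fact r * c ^ q * Y ^ w)"
  proof (cases q)
    case (Suc q')
    then show ?thesis using Suc.IH[of q' w] Suc.prems by simp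
  qed simp
  also have "of_nat w * Y * m 0 q r (w-1) = of_nat w * (fact r * c ^ q * Y ^ w)"
  proof (cases w)
    case (Suc w')
    then show ?thesis using Suc.IH[of q w'] Suc.prems by simp
  qed simp
  also have "of_nat q * (fact r * c ^ q * Y ^ w) + of_nat w * (fact r * c ^ q * Y ^ w)
      = of_nat (q + w) * (fact r * c ^ q * Y ^ w)" by (simp add: algebra_simps)
  also have "\<dots> = fact (Suc r) * c ^ q * Y ^ w" using Suc.prems by (simp add: fact_Suc)
  finally show ?case .
qed

lemma mD: "q + w = p + s \<Longrightarrow> m p q s w = fact s * FF X Y c p q w"
proof (induction p arbitrary: q w)
  case 0
  have "FF X Y c 0 q w = c ^ q * Y ^ w" unfolding FF_def TT_def by simp
  then show ?case using mD0[of q w s] 0 by simp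
next
  case (Suc p)
  have "m (Suc p) q s w = of_nat q * X * m p (q-1) s w + of_nat w * c * m p q s (w-1)" by (rule R1)
  also have "of_nat q * X * m p (q-1) s w = of_nat q * X * (fact s * FF X Y c p (q-1) w)"
  proof (cases q)
    case (Suc q')
    then show ?thesis using Suc.IH[of q' w] Suc.prems by simp
  qed simp
  also have "of_nat w * c * m p q s (w-1) = of_nat w * c * (fact s * FF X Y c p q (w-1))"
  proof (cases w)
    case (Suc w')
    then show ?thesis using Suc.IH[of q w'] Suc.prems by simp
  qed simp
  also have "of_nat q * X * (fact s * FF X Y c p (q-1) w) + of_nat w * c * (fact s * FF X Y c p q (w-1))
     = fact s * FF X Y c (Suc p) q w" unfolding FF_Suc by (simp add: algebra_simps)
  finally show ?case .
qed

lemma m_sss: "m s s s s = (\<Sum>i\<le>s. (fact s)^2 * of_nat (s choose i)^2 * c^(2*i) * (X*Y)^(s-i))"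
proof -
  have "m s s s s = fact s * FF X Y c s s s" by (rule mD) simp
  also have "\<dots> = (\<Sum>k\<le>s. (fact s)^2 * of_nat (s choose k)^2 * c^(2*(s-k)) * (X*Y)^k)"
    unfolding FF_def sum_distrib_left
  proof (intro sum.cong refl)
    fix k assume k: "k \<in> {..s}"
    then have "fact k * ff s (s - k) = fact s" using ff_fact[of "s-k" s] by (simp add: mult.commute)
    moreover have "s - (s - k) = k" "(s - k) + (s - k) = 2 * (s - k)" using k by auto
    ultimately show "fact s * TT X Y c s s s k = (fact s)^2 * of_nat (s choose k)^2 * c^(2*(s-k)) * (X*Y)^k"
      unfolding TT_def by (simp add: power2_eq_square power_mult_distrib algebra_simps)
  qed
  also have "\<dots> = (\<Sum>i\<le>s. (fact s)^2 * of_nat (s choose i)^2 * c^(2*i) * (X*Y)^(s-i))"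
    by (rule sum.reindex_bij_witness[where i="\<lambda>i. s - i" and j="\<lambda>i. s - i"])
       (auto simp: binomial_symmetric[symmetric])
  finally show ?thesis .
qed

end

lemma mom_rec2:
  fixes x y :: "real ^ 'd::finite"
  shows "mom x y p q (Suc r) w = of_nat q * of_real (x \<bullet> y) * mom x y p (q-1) r w
                                    + of_nat w * of_real (y \<bullet> y) * mom x y p q r (w-1)"
  by (subst (1 2 3) mom_swap, subst mom_rec1) (simp add: inner_commute algebra_simps)

lemma mom_sss:
  fixes x y :: "real ^ 'd::finite"
  shows "mom x y s s s s = (\<Sum>i\<le>s. (fact s)^2 * of_nat (s choose i)^2 * of_real (x \<bullet> y)^(2*i)
                               * (of_real (x \<bullet> x) * of_real (y \<bullet> y))^(s-i))"
  apply (rule m_sss[of "mom x y" "of_real (x \<bullet> x)" "of_real (x \<bullet> y)" "of_real (y \<bullet> y)"])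
  apply (rule mom_rec1)
  apply (rule mom_rec2)
  apply (rule mom_cnj)
  apply (rule mom_0)
  done

lemma real_moment_Pd:
  fixes x y :: "real ^ 'd::finite"
  shows "integral\<^sup>L (PiM UNIV (\<lambda>_::'d. SCN)) (\<lambda>v. cmod (rc_dot x v) ^ (2 * s) * cmod (rc_dot y v) ^ (2 * s))
       = (\<Sum>i\<le>s. (fact s)^2 * real (s choose i)^2 * (x \<bullet> y) ^ (2 * i) * (norm x * norm y) ^ (2 * (s - i)))"
proof -
  let ?f = "\<lambda>v. cmod (rc_dot x v) ^ (2 * s) * cmod (rc_dot y v) ^ (2 * s)"
  have "complex_of_real (integral\<^sup>L (PiM UNIV (\<lambda>_::'d. SCN)) ?f)
      = integral\<^sup>L (PiM UNIV (\<lambda>_::'d. SCN)) (\<lambda>v. complex_of_real (?f v))"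
    by (rule integral_complex_of_real[symmetric])
  also have "\<dots> = mom x y s s s s"
    unfolding mom_def
  proof (intro Bochner_Integration.integral_cong refl)
    fix v :: "'d \<Rightarrow> complex"
    have a: "complex_of_real (cmod z ^ (2 * s)) = z ^ s * cnj z ^ s" for z :: complex
    proof -
      have "complex_of_real (cmod z ^ (2 * s)) = (complex_of_real ((cmod z)^2))^s"
        by (simp only: power_mult of_real_power)
      also have "\<dots> = (z * cnj z)^s" by (simp only: complex_mult_cnj cmod_power2)
      finally show ?thesis by (simp only: power_mult_distrib)
    qed
    show "complex_of_real (?f v) = G x y s s s s v"
      unfolding G_def of_real_mult a by (simp add: mult_ac)
  qed
  also have "\<dots> = complex_of_real (\<Sum>i\<le>s. (fact s)^2 * real (s choose i)^2 * (x \<bullet> y) ^ (2 * i) * (norm x * norm y) ^ (2 * (s - i)))"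
    unfolding mom_sss
    by (simp add: power_mult power_mult_distrib power2_norm_eq_inner[symmetric])
  finally show ?thesis by (simp only: of_real_eq_iff)
qed

lemma moment_transport:
  fixes u :: "'a \<Rightarrow> 'd::finite \<Rightarrow> complex" and F :: "('d \<Rightarrow> complex) \<Rightarrow> real"
  assumes M: "prob_space M"
    and u_indep: "prob_space.indep_vars M (\<lambda>_. borel) (\<lambda>j \<omega>. u \<omega> j) UNIV"
    and u_distr: "\<And>j. distr M borel (\<lambda>\<omega>. u \<omega> j) = std_complex_normal"
    and F[measurable]: "F \<in> borel_measurable (PiM UNIV (\<lambda>_::'d. borel))"
  shows "integral\<^sup>L M (\<lambda>\<omega>. F (u \<omega>)) = integral\<^sup>L (PiM UNIV (\<lambda>_::'d. SCN)) F"
    and "u \<in> measurable M (PiM UNIV (\<lambda>_::'d. borel))"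
    and "distr M (PiM UNIV (\<lambda>_::'d. borel)) u = PiM UNIV (\<lambda>_::'d. SCN)"
proof -
  interpret prob_space M by (rule M)
  have rv: "random_variable borel (\<lambda>\<omega>. u \<omega> j)" for j
    using u_indep unfolding indep_vars_def by auto
  have D: "distr M (PiM UNIV (\<lambda>_::'d. borel)) (\<lambda>\<omega>. \<lambda>j\<in>UNIV. u \<omega> j) = PiM UNIV (\<lambda>j. distr M borel (\<lambda>\<omega>. u \<omega> j))"
    using indep_vars_iff_distr_eq_PiM[of UNIV "\<lambda>j \<omega>. u \<omega> j" "\<lambda>_. borel"] rv u_indep by simp
  have r: "(\<lambda>\<omega>. \<lambda>j\<in>UNIV. u \<omega> j) = u" by (simp add: fun_eq_iff)
  show D': "distr M (PiM UNIV (\<lambda>_::'d. borel)) u = PiM UNIV (\<lambda>_::'d. SCN)"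
    using D unfolding r u_distr .
  show mu: "u \<in> measurable M (PiM UNIV (\<lambda>_::'d. borel))"
    by (rule measurable_PiM_single') (use rv in auto)
  have "integral\<^sup>L M (\<lambda>\<omega>. F (u \<omega>)) = integral\<^sup>L (distr M (PiM UNIV (\<lambda>_::'d. borel)) u) F"
    by (rule integral_distr[symmetric]) (use mu in auto)
  then show "integral\<^sup>L M (\<lambda>\<omega>. F (u \<omega>)) = integral\<^sup>L (PiM UNIV (\<lambda>_::'d. SCN)) F" unfolding D' .
qed

lemma sqrt_floor_props:
  fixes n :: nat
  defines "m \<equiv> nat \<lfloor>sqrt (real n)\<rfloor>"
  shows "m^2 \<le> n" "n < (m+1)^2"
proof -
  have s0: "0 \<le> sqrt (real n)" by simp
  have f0: "0 \<le> \<lfloor>sqrt (real n)\<rfloor>" by simp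
  have rm: "real m = of_int \<lfloor>sqrt (real n)\<rfloor>" unfolding m_def using f0 by simp
  have "real m \<le> sqrt (real n)" unfolding rm by simp
  then have "(real m)^2 \<le> (sqrt (real n))^2" by (intro power_mono) auto
  then have "real (m^2) \<le> real n" by simp
  then show "m^2 \<le> n" by linarith
  have "sqrt (real n) < real m + 1" unfolding rm by linarith
  then have "(sqrt (real n))^2 < (real m + 1)^2" by (intro power_strict_mono) auto
  then have "real n < real ((m+1)^2)" by (simp add: add.commute)
  then show "n < (m+1)^2" by linarith
qed

lemma sqrt_floor_filterlim: "filterlim (\<lambda>n::nat. nat \<lfloor>sqrt (real n)\<rfloor>) at_top sequentially"
  unfolding filterlim_at_top
proof (intro allI)
  fix Z :: nat
  show "eventually (\<lambda>n. Z \<le> nat \<lfloor>sqrt (real n)\<rfloor>) sequentially"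
  proof (rule eventually_sequentiallyI[of "Z^2"])
    fix n assume "Z^2 \<le> n"
    then have "real (Z^2) \<le> real n" by linarith
    then have "sqrt (real (Z^2)) \<le> sqrt (real n)" by (rule real_sqrt_le_mono)
    then have "real Z \<le> sqrt (real n)" by simp
    then have "of_int (int Z) \<le> sqrt (real n)" by simp
    then have "int Z \<le> \<lfloor>sqrt (real n)\<rfloor>" by (rule le_floor_iff[THEN iffD2])
    then show "Z \<le> nat \<lfloor>sqrt (real n)\<rfloor>" by linarith
  qed
qed

context prob_space
begin

lemma var_sum:
  fixes X :: "nat \<Rightarrow> 'a \<Rightarrow> real"
  assumes int1: "\<And>k. integrable M (X k)"
    and int2: "\<And>i j. integrable M (\<lambda>\<omega>. X i \<omega> * X j \<omega>)"
    and mean: "\<And>k. expectation (X k) = \<mu>"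
    and sec: "\<And>k. expectation (\<lambda>\<omega>. (X k \<omega>)^2) = msq"
    and unc: "\<And>i j. i \<noteq> j \<Longrightarrow> expectation (\<lambda>\<omega>. X i \<omega> * X j \<omega>) = \<mu>^2"
  shows "expectation (\<lambda>\<omega>. ((\<Sum>k<n. X k \<omega>) - real n * \<mu>)^2) = real n * (msq - \<mu>^2)"
proof -
  have e: "((\<Sum>k<n. X k \<omega>) - real n * \<mu>)^2 = (\<Sum>i<n. \<Sum>j<n. (X i \<omega> - \<mu>) * (X j \<omega> - \<mu>))" for \<omega>
  proof -
    have "(\<Sum>k<n. X k \<omega>) - real n * \<mu> = (\<Sum>k<n. X k \<omega> - \<mu>)" by (simp add: sum_subtractf)
    then show ?thesis by (simp add: power2_eq_square sum_product)
  qed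
  have ij: "expectation (\<lambda>\<omega>. (X i \<omega> - \<mu>) * (X j \<omega> - \<mu>)) = (if i = j then msq - \<mu>^2 else 0)" for i j
  proof -
    have "expectation (\<lambda>\<omega>. (X i \<omega> - \<mu>) * (X j \<omega> - \<mu>))
        = expectation (\<lambda>\<omega>. X i \<omega> * X j \<omega>) - \<mu> * expectation (X j) - \<mu> * expectation (X i) + \<mu>^2"
      by (simp add: algebra_simps int1 int2 prob_space power2_eq_square)
    then show ?thesis using mean unc[of i j] sec[of i] by (auto simp: power2_eq_square)
  qed
  have "expectation (\<lambda>\<omega>. ((\<Sum>k<n. X k \<omega>) - real n * \<mu>)^2)
      = (\<Sum>i<n. \<Sum>j<n. expectation (\<lambda>\<omega>. (X i \<omega> - \<mu>) * (X j \<omega> - \<mu>)))"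
    unfolding e
    by (subst Bochner_Integration.integral_sum, simp add: algebra_simps int1 int2,
        intro sum.cong refl, subst Bochner_Integration.integral_sum) (auto simp: algebra_simps int1 int2)
  also have "\<dots> = (\<Sum>i<n. msq - \<mu>^2)" unfolding ij by (simp add: sum.delta)
  finally show ?thesis by simp
qed

lemma summable_inv_Suc_sq: "summable (\<lambda>m::nat. C / (real (Suc m))^2)"
proof -
  have "summable (\<lambda>m::nat. inverse ((real m)^2))" using inverse_power_summable[of 2] by simp
  then have "summable (\<lambda>m::nat. inverse ((real (Suc m))^2))" by (subst summable_Suc_iff)
  then have "summable (\<lambda>m::nat. C * inverse ((real (Suc m))^2))" by (rule summable_mult)
  then show ?thesis by (simp add: divide_inverse)
qed

lemma slln_subseq:
  fixes X :: "nat \<Rightarrow> 'a \<Rightarrow> real"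
  assumes rv[measurable]: "\<And>k. X k \<in> borel_measurable M"
    and int1: "\<And>k. integrable M (X k)"
    and int2: "\<And>i j. integrable M (\<lambda>\<omega>. X i \<omega> * X j \<omega>)"
    and mean: "\<And>k. expectation (X k) = \<mu>"
    and sec: "\<And>k. expectation (\<lambda>\<omega>. (X k \<omega>)^2) = msq"
    and unc: "\<And>i j. i \<noteq> j \<Longrightarrow> expectation (\<lambda>\<omega>. X i \<omega> * X j \<omega>) = \<mu>^2"
  shows "AE \<omega> in M. (\<lambda>m. (\<Sum>k<(Suc m)^2. X k \<omega>) / real ((Suc m)^2)) \<longlonglongrightarrow> \<mu>"
proof -
  define S where "S n \<omega> = (\<Sum>k<n. X k \<omega>)" for n \<omega>
  have S_meas[measurable]: "S n \<in> borel_measurable M" for n unfolding S_def by measurable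
  have S_int: "integrable M (S n)" for n unfolding S_def by (auto intro: int1)
  have S_sq_int: "integrable M (\<lambda>\<omega>. (S n \<omega>)^2)" for n
    unfolding S_def power2_eq_square sum_product by (auto intro!: int2)
  have S_mean: "expectation (S n) = real n * \<mu>" for n
    unfolding S_def by (simp add: int1 mean)
  have S_var: "variance (S n) = real n * (msq - \<mu>^2)" for n
    unfolding S_mean using var_sum[OF int1 int2 mean sec unc] unfolding S_def .
  define Y where "Y m \<omega> = S ((Suc m)^2) \<omega> / real ((Suc m)^2)" for m \<omega>
  have ev: "AE \<omega> in M. eventually (\<lambda>m. \<bar>Y m \<omega> - \<mu>\<bar> < 1 / real (Suc r)) sequentially" for r :: nat
  proof -
    define \<epsilon> where "\<epsilon> = 1 / real (Suc r)"
    have \<epsilon>0: "\<epsilon> > 0" unfolding \<epsilon>_def by simp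
    define A where "A m = {\<omega>\<in>space M. real ((Suc m)^2) * \<epsilon> \<le> \<bar>S ((Suc m)^2) \<omega> - real ((Suc m)^2) * \<mu>\<bar>}" for m
    have A_sets[measurable]: "A m \<in> sets M" for m unfolding A_def by measurable
    have A_prob: "measure M (A m) \<le> (msq - \<mu>^2) / \<epsilon>^2 / (real (Suc m))^2" for m
    proof -
      define n where "n = (Suc m)^2"
      have n0: "real n > 0" unfolding n_def by simp
      have "measure M (A m) \<le> variance (S n) / (real n * \<epsilon>)^2"
        unfolding A_def n_def[symmetric] using Chebyshev_inequality[OF S_meas S_sq_int, of "real n * \<epsilon>"] n0 \<epsilon>0
        by (simp add: S_mean)
      also have "\<dots> = (msq - \<mu>^2) / \<epsilon>^2 / real n"
        unfolding S_var using n0 \<epsilon>0 by (simp add: power2_eq_square field_simps)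
      also have "\<dots> = (msq - \<mu>^2) / \<epsilon>^2 / (real (Suc m))^2" unfolding n_def by simp
      finally show ?thesis .
    qed
    have summ: "summable (\<lambda>m. measure M (A m))"
      by (rule summable_comparison_test'[OF summable_inv_Suc_sq[of "(msq - \<mu>^2) / \<epsilon>^2"]])
         (use A_prob in auto)
    have "AE \<omega> in M. eventually (\<lambda>m. \<omega> \<in> space M - A m) sequentially"
      by (rule borel_cantelli_AE1[OF A_sets _ summ]) (simp add: emeasure_eq_measure)
    then show ?thesis
    proof (rule AE_mp, intro AE_I2 impI)
      fix \<omega> assume \<omega>: "\<omega> \<in> space M" and e: "eventually (\<lambda>m. \<omega> \<in> space M - A m) sequentially"
      show "eventually (\<lambda>m. \<bar>Y m \<omega> - \<mu>\<bar> < 1 / real (Suc r)) sequentially"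
        using e
      proof eventually_elim
        case (elim m)
        define n where "n = (Suc m)^2"
        have n0: "real n > 0" unfolding n_def by simp
        have "\<bar>S n \<omega> - real n * \<mu>\<bar> < real n * \<epsilon>" using elim \<omega> unfolding A_def n_def by auto
        then have "\<bar>S n \<omega> - real n * \<mu>\<bar> / real n < \<epsilon>" using n0 by (simp only: pos_divide_less_eq mult.commute)
        moreover have "\<bar>S n \<omega> - real n * \<mu>\<bar> / real n = \<bar>Y m \<omega> - \<mu>\<bar>"
        proof -
          have "Y m \<omega> - \<mu> = (S n \<omega> - real n * \<mu>) / real n"
            unfolding Y_def n_def[symmetric] using n0 by (simp add: diff_divide_distrib)
          then show ?thesis using n0 by (simp add: abs_divide)
        qed
        ultimately show ?case unfolding \<epsilon>_def by simp
      qed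
    qed
  qed
  then have "AE \<omega> in M. \<forall>r::nat. eventually (\<lambda>m. \<bar>Y m \<omega> - \<mu>\<bar> < 1 / real (Suc r)) sequentially"
    by (subst AE_all_countable) auto
  then show ?thesis
  proof (rule AE_mp, intro AE_I2 impI)
    fix \<omega> assume H: "\<forall>r::nat. eventually (\<lambda>m. \<bar>Y m \<omega> - \<mu>\<bar> < 1 / real (Suc r)) sequentially"
    have "(\<lambda>m. Y m \<omega>) \<longlonglongrightarrow> \<mu>"
    proof (rule tendstoI)
      fix e :: real assume "e > 0"
      then obtain r :: nat where r: "1 / real (Suc r) < e"
        using nat_approx_posE by blast
      show "eventually (\<lambda>m. dist (Y m \<omega>) \<mu> < e) sequentially"
        using H[rule_format, of r] by eventually_elim (use r in \<open>auto simp: dist_real_def\<close>)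
    qed
    then show "(\<lambda>m. (\<Sum>k<(Suc m)^2. X k \<omega>) / real ((Suc m)^2)) \<longlonglongrightarrow> \<mu>"
      unfolding Y_def S_def .
  qed
qed

lemma slln_nonneg:
  fixes X :: "nat \<Rightarrow> 'a \<Rightarrow> real"
  assumes rv[measurable]: "\<And>k. X k \<in> borel_measurable M"
    and nn: "\<And>k \<omega>. \<omega> \<in> space M \<Longrightarrow> 0 \<le> X k \<omega>"
    and int1: "\<And>k. integrable M (X k)"
    and int2: "\<And>i j. integrable M (\<lambda>\<omega>. X i \<omega> * X j \<omega>)"
    and mean: "\<And>k. expectation (X k) = \<mu>"
    and sec: "\<And>k. expectation (\<lambda>\<omega>. (X k \<omega>)^2) = msq"
    and unc: "\<And>i j. i \<noteq> j \<Longrightarrow> expectation (\<lambda>\<omega>. X i \<omega> * X j \<omega>) = \<mu>^2"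
  shows "AE \<omega> in M. (\<lambda>n. (\<Sum>k<n. X k \<omega>) / real n) \<longlonglongrightarrow> \<mu>"
proof -
  have sub: "AE \<omega> in M. (\<lambda>m. (\<Sum>k<(Suc m)^2. X k \<omega>) / real ((Suc m)^2)) \<longlonglongrightarrow> \<mu>"
    apply (rule slln_subseq[where X=X and msq=msq])
    apply (rule rv)
    apply (rule int1)
    apply (rule int2)
    apply (rule mean)
    apply (rule sec)
    apply (erule unc)
    done
  show ?thesis
  using sub
proof (rule AE_mp, intro AE_I2 impI)
  fix \<omega> assume \<omega>: "\<omega> \<in> space M"
  define S where "S n = (\<Sum>k<n. X k \<omega>)" for n
  define Y where "Y m = S ((Suc m)^2) / real ((Suc m)^2)" for m
  assume "(\<lambda>m. (\<Sum>k<(Suc m)^2. X k \<omega>) / real ((Suc m)^2)) \<longlonglongrightarrow> \<mu>"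
  then have Y: "Y \<longlonglongrightarrow> \<mu>" unfolding Y_def S_def .
  have S_mono: "a \<le> b \<Longrightarrow> S a \<le> S b" for a b
    unfolding S_def by (rule sum_mono2) (auto intro: nn \<omega>)
  have S_nn: "0 \<le> S a" for a unfolding S_def by (intro sum_nonneg nn \<omega>)
  define g where "g n = nat \<lfloor>sqrt (real n)\<rfloor> - 1" for n :: nat
  define Lo where "Lo q = Y q * (real (Suc q) / real (Suc (Suc q)))^2" for q
  define Up where "Up q = Y (Suc q) * (real (Suc (Suc q)) / real (Suc q))^2" for q
  have Lo_lim: "Lo \<longlonglongrightarrow> \<mu>"
  proof -
    have "(\<lambda>q. real (Suc q) / real (Suc (Suc q))) \<longlonglongrightarrow> 1"
      using LIMSEQ_Suc[OF LIMSEQ_n_over_Suc_n] by simp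
    then have "Lo \<longlonglongrightarrow> \<mu> * 1^2" unfolding Lo_def by (intro tendsto_intros Y)
    then show ?thesis by simp
  qed
  have Up_lim: "Up \<longlonglongrightarrow> \<mu>"
  proof -
    have "(\<lambda>q. real (Suc (Suc q)) / real (Suc q)) \<longlonglongrightarrow> 1"
      using LIMSEQ_Suc[OF LIMSEQ_Suc_n_over_n] by simp
    then have "Up \<longlonglongrightarrow> \<mu> * 1^2" unfolding Up_def by (intro tendsto_intros LIMSEQ_Suc[OF Y])
    then show ?thesis by simp
  qed
  have g_lim: "filterlim g sequentially sequentially"
    unfolding filterlim_at_top
  proof
    fix Z
    have "eventually (\<lambda>n. Suc Z \<le> nat \<lfloor>sqrt (real n)\<rfloor>) sequentially"
      using sqrt_floor_filterlim unfolding filterlim_at_top by blast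
    then show "eventually (\<lambda>n. Z \<le> g n) sequentially"
      by eventually_elim (simp add: g_def)
  qed
  have bounds: "Lo (g n) \<le> S n / real n \<and> S n / real n \<le> Up (g n)" if n1: "n \<ge> 1" for n
  proof -
    define m where "m = nat \<lfloor>sqrt (real n)\<rfloor>"
    have m1: "m \<ge> 1"
    proof -
      have "1 \<le> sqrt (real n)" using n1 by simp
      then have "1 \<le> \<lfloor>sqrt (real n)\<rfloor>" by (simp add: le_floor_iff)
      then show ?thesis unfolding m_def by linarith
    qed
    have gm: "Suc (g n) = m" unfolding g_def m_def[symmetric] using m1 by simp
    have lo_n: "(Suc (g n))^2 \<le> n" and hi_n: "n < (Suc (Suc (g n)))^2"
      using sqrt_floor_props[of n] unfolding m_def[symmetric] gm by auto
    define a where "a = real ((Suc (g n))^2)"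
    define b where "b = real ((Suc (Suc (g n)))^2)"
    have a0: "a > 0" unfolding a_def by simp
    have an: "a \<le> real n" unfolding a_def using lo_n by linarith
    have nb: "real n \<le> b" unfolding b_def using hi_n by linarith
    have n0: "real n > 0" using n1 by simp
    have gen: "x / A^2 * (A/B)^2 = x / B^2" if "A > 0" "B > 0" for x A B :: real
      using that by (simp add: power_divide field_simps)
    have Lo_eq: "Lo (g n) = S ((Suc (g n))^2) / b"
      unfolding Lo_def Y_def b_def of_nat_power
      by (rule gen) auto
    have Up_eq: "Up (g n) = S ((Suc (Suc (g n)))^2) / a"
      unfolding Up_def Y_def a_def of_nat_power
      by (rule gen) auto
    have "S ((Suc (g n))^2) / b \<le> S ((Suc (g n))^2) / real n"
      using n0 nb S_nn by (intro divide_left_mono) auto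
    also have "\<dots> \<le> S n / real n"
      using n0 by (intro divide_right_mono S_mono lo_n) auto
    finally have 1: "Lo (g n) \<le> S n / real n" unfolding Lo_eq .
    have "S n / real n \<le> S ((Suc (Suc (g n)))^2) / real n"
      using n0 hi_n by (intro divide_right_mono S_mono) auto
    also have "\<dots> \<le> S ((Suc (Suc (g n)))^2) / a"
      using a0 an S_nn by (intro divide_left_mono) auto
    finally have 2: "S n / real n \<le> Up (g n)" unfolding Up_eq .
    show ?thesis using 1 2 by simp
  qed
  have "(\<lambda>n. S n / real n) \<longlonglongrightarrow> \<mu>"
  proof (rule tendsto_sandwich)
    show "eventually (\<lambda>n. Lo (g n) \<le> S n / real n) sequentially"
      using eventually_ge_at_top[of "1::nat"] by eventually_elim (use bounds in blast)
    show "eventually (\<lambda>n. S n / real n \<le> Up (g n)) sequentially"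
      using eventually_ge_at_top[of "1::nat"] by eventually_elim (use bounds in blast)
    show "(\<lambda>n. Lo (g n)) \<longlonglongrightarrow> \<mu>" by (rule filterlim_compose[OF Lo_lim g_lim])
    show "(\<lambda>n. Up (g n)) \<longlonglongrightarrow> \<mu>" by (rule filterlim_compose[OF Up_lim g_lim])
  qed
  then show "(\<lambda>n. (\<Sum>k<n. X k \<omega>) / real n) \<longlonglongrightarrow> \<mu>" unfolding S_def .
qed
qed

end

lemma (in prob_space) indep_sets_reindex:
  assumes ind: "indep_sets F I" and inj: "inj_on f J" and sub: "f ` J \<subseteq> I"
  shows "indep_sets (\<lambda>j. F (f j)) J"
  unfolding indep_sets_def
proof (intro conjI ballI allI impI)
  fix j assume "j \<in> J"
  then show "F (f j) \<subseteq> events" using ind sub unfolding indep_sets_def by auto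
next
  fix K A assume K: "K \<subseteq> J" "K \<noteq> {}" "finite K" and A: "A \<in> Pi K (\<lambda>j. F (f j))"
  define B where "B i = A (the_inv_into K f i)" for i
  have injK: "inj_on f K" using inj K(1) by (rule inj_on_subset)
  have Bf: "B (f j) = A j" if "j \<in> K" for j
    unfolding B_def using the_inv_into_f_f[OF injK that] by simp
  have "prob (\<Inter>i\<in>f ` K. B i) = (\<Prod>i\<in>f ` K. prob (B i))"
  proof -
    have H: "\<forall>A\<in>Pi (f ` K) F. prob (\<Inter>j\<in>f ` K. A j) = (\<Prod>j\<in>f ` K. prob (A j))"
      using ind K sub unfolding indep_sets_def by (meson finite_imageI image_is_empty image_mono order_trans)
    have "B \<in> Pi (f ` K) F" using A Bf by (auto simp: Pi_iff)
    then show ?thesis using H by blast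
  qed
  moreover have "(\<Inter>i\<in>f ` K. B i) = (\<Inter>j\<in>K. A j)" using Bf by auto
  moreover have "(\<Prod>i\<in>f ` K. prob (B i)) = (\<Prod>j\<in>K. prob (A j))"
    using prod.reindex[OF injK, of "\<lambda>i. prob (B i)"] Bf by simp
  ultimately show "prob (\<Inter>j\<in>K. A j) = (\<Prod>j\<in>K. prob (A j))" by metis
qed

lemma (in prob_space) indep_vars_reindex:
  assumes ind: "indep_vars M' X I" and inj: "inj_on f J" and sub: "f ` J \<subseteq> I"
  shows "indep_vars (\<lambda>j. M' (f j)) (\<lambda>j. X (f j)) J"
  using ind sub unfolding indep_vars_def2
  by (auto intro: indep_sets_reindex[OF _ inj sub])

lemma rc_dot_meas_borel[measurable]: "rc_dot x \<in> borel_measurable (PiM UNIV (\<lambda>_::'d::finite. borel))"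
  unfolding rc_dot_def by measurable

definition Fk :: "real ^ 'd::finite \<Rightarrow> real ^ 'd \<Rightarrow> nat \<Rightarrow> ('d \<Rightarrow> complex) \<Rightarrow> real" where
  "Fk x y n v = cmod (rc_dot x v) ^ (2 * n) * cmod (rc_dot y v) ^ (2 * n)"

lemma Fk_meas[measurable]: "Fk x y n \<in> borel_measurable (PiM UNIV (\<lambda>_::'d::finite. borel))"
  unfolding Fk_def by measurable

lemma Fk_G: "complex_of_real (Fk x y n v) = G x y n n n n v"
proof -
  have a: "complex_of_real (cmod z ^ (2 * n)) = z ^ n * cnj z ^ n" for z :: complex
  proof -
    have "complex_of_real (cmod z ^ (2 * n)) = (complex_of_real ((cmod z)^2))^n"
      by (simp only: power_mult of_real_power)
    also have "\<dots> = (z * cnj z)^n" by (simp only: complex_mult_cnj cmod_power2)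
    finally show ?thesis by (simp only: power_mult_distrib)
  qed
  show ?thesis unfolding Fk_def G_def of_real_mult a by (simp add: mult_ac)
qed

lemma Fk_sq: "(Fk x y n v)^2 = Fk x y (2*n) v"
  unfolding Fk_def by (simp add: power2_eq_square power_add[symmetric] mult_ac)

lemma integrable_Pd_Fk: "integrable (PiM UNIV (\<lambda>_::'d::finite. SCN)) (Fk x y n)"
proof -
  have "integrable (PiM UNIV (\<lambda>_::'d. SCN)) (\<lambda>v. Re (G x y n n n n v))"
    by (intro integrable_Re integrable_Pd_G)
  moreover have "Re (G x y n n n n v) = Fk x y n v" for v
    unfolding Fk_G[symmetric] by simp
  ultimately show ?thesis by simp
qed

lemma integral_Pd_Fk:
  fixes x y :: "real ^ 'd::finite"
  shows "integral\<^sup>L (PiM UNIV (\<lambda>_::'d. SCN)) (Fk x y s)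
       = (\<Sum>i\<le>s. (fact s)^2 * real (s choose i)^2 * (x \<bullet> y) ^ (2 * i) * (norm x * norm y) ^ (2 * (s - i)))"
  unfolding Fk_def by (rule real_moment_Pd)

lemma row_transport:
  fixes U :: "'b \<Rightarrow> nat \<Rightarrow> 'd::finite \<Rightarrow> complex"
  assumes N: "prob_space N"
    and U_indep: "prob_space.indep_vars N (\<lambda>_. borel) (\<lambda>(k, j) \<omega>. U \<omega> k j) UNIV"
    and U_distr: "\<And>k j. distr N borel (\<lambda>\<omega>. U \<omega> k j) = std_complex_normal"
  shows "prob_space.indep_vars N (\<lambda>_. borel) (\<lambda>j \<omega>. U \<omega> k j) UNIV"
proof -
  interpret prob_space N by (rule N)
  have "indep_vars (\<lambda>j. (\<lambda>_. borel) (k, j)) (\<lambda>j. (\<lambda>(k, j) \<omega>. U \<omega> k j) (k, j)) UNIV"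
    by (rule indep_vars_reindex[OF U_indep]) (auto simp: inj_on_def)
  then show ?thesis by simp
qed

lemma row_meas:
  "(\<lambda>f. \<lambda>j'. f (i, j')) \<in> measurable (PiM ({i} \<times> (UNIV::'d set)) (\<lambda>_. borel :: complex measure)) (PiM (UNIV::'d set) (\<lambda>_. borel))"
  by (rule measurable_PiM_single') (auto simp: space_PiM)

theorem theorem2:
  fixes M :: "'a measure" and u :: "'a \<Rightarrow> 'd::finite \<Rightarrow> complex"
    and N :: "'b measure" and U :: "'b \<Rightarrow> nat \<Rightarrow> 'd \<Rightarrow> complex"
    and s :: nat and x y :: "real ^ 'd"
  assumes M: "prob_space M"
    and u_indep: "prob_space.indep_vars M (\<lambda>_. borel) (\<lambda>j \<omega>. u \<omega> j) UNIV"
    and u_distr: "\<And>j. distr M borel (\<lambda>\<omega>. u \<omega> j) = std_complex_normal"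
    and N: "prob_space N"
    and U_indep: "prob_space.indep_vars N (\<lambda>_. borel) (\<lambda>(k, j) \<omega>. U \<omega> k j) UNIV"
    and U_distr: "\<And>k j. distr N borel (\<lambda>\<omega>. U \<omega> k j) = std_complex_normal"
  shows
    "integral\<^sup>L M (\<lambda>\<omega>. cmod (rc_dot x (u \<omega>)) ^ (2 * s) * cmod (rc_dot y (u \<omega>)) ^ (2 * s))
       = (\<Sum>i\<le>s. (fact s)^2 * real (s choose i)^2 * (x \<bullet> y) ^ (2 * i)
                   * (norm x * norm y) ^ (2 * (s - i)))
     \<and> (x \<noteq> 0 \<longrightarrow> y \<noteq> 0 \<longrightarrow>
         (\<forall>\<theta>. cos \<theta> = (x \<bullet> y) / (norm x * norm y) \<longrightarrow>
           integral\<^sup>L M (\<lambda>\<omega>. cmod (rc_dot x (u \<omega>)) ^ (2 * s) * cmod (rc_dot y (u \<omega>)) ^ (2 * s))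
             = norm x ^ (2 * s) * norm y ^ (2 * s) *
               (\<Sum>i\<le>s. (fact s)^2 * real (s choose i)^2 * (cos \<theta>) ^ (2 * i))))
     \<and> (AE \<omega> in N.
          (\<lambda>D::nat. \<Sum>k<D. (1 / sqrt (real D) * cmod (rc_dot x (U \<omega> k)) ^ (2 * s))
                            * (1 / sqrt (real D) * cmod (rc_dot y (U \<omega> k)) ^ (2 * s)))
          \<longlonglongrightarrow> (\<Sum>i\<le>s. (fact s)^2 * real (s choose i)^2 * (x \<bullet> y) ^ (2 * i)
                          * (norm x * norm y) ^ (2 * (s - i))))"
proof -
  define T where "T = (\<Sum>i\<le>s. (fact s)^2 * real (s choose i)^2 * (x \<bullet> y) ^ (2 * i) * (norm x * norm y) ^ (2 * (s - i)))"
  have P1: "integral\<^sup>L M (\<lambda>\<omega>. cmod (rc_dot x (u \<omega>)) ^ (2 * s) * cmod (rc_dot y (u \<omega>)) ^ (2 * s)) = T"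
  proof -
    have "integral\<^sup>L M (\<lambda>\<omega>. cmod (rc_dot x (u \<omega>)) ^ (2 * s) * cmod (rc_dot y (u \<omega>)) ^ (2 * s))
        = integral\<^sup>L M (\<lambda>\<omega>. Fk x y s (u \<omega>))" by (simp add: Fk_def)
    also have "\<dots> = integral\<^sup>L (PiM UNIV (\<lambda>_::'d. SCN)) (Fk x y s)"
      by (rule moment_transport(1)[OF M u_indep u_distr Fk_meas])
    also have "\<dots> = T" unfolding T_def by (rule integral_Pd_Fk)
    finally show ?thesis .
  qed
  have P2: "x \<noteq> 0 \<longrightarrow> y \<noteq> 0 \<longrightarrow>
         (\<forall>\<theta>. cos \<theta> = (x \<bullet> y) / (norm x * norm y) \<longrightarrow>
           T = norm x ^ (2 * s) * norm y ^ (2 * s) *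
               (\<Sum>i\<le>s. (fact s)^2 * real (s choose i)^2 * (cos \<theta>) ^ (2 * i)))"
  proof (intro impI allI)
    fix \<theta> assume x0: "x \<noteq> 0" and y0: "y \<noteq> 0" and c: "cos \<theta> = (x \<bullet> y) / (norm x * norm y)"
    have nz: "norm x * norm y \<noteq> 0" using x0 y0 by simp
    have xy: "x \<bullet> y = cos \<theta> * (norm x * norm y)" using c nz by (simp add: field_simps)
    have "T = (\<Sum>i\<le>s. (norm x * norm y) ^ (2 * s) * ((fact s)^2 * real (s choose i)^2 * (cos \<theta>) ^ (2 * i)))"
      unfolding T_def
    proof (intro sum.cong refl)
      fix i assume "i \<in> {..s}"
      then have e: "2 * s = 2 * i + 2 * (s - i)" by auto
      show "(fact s)^2 * real (s choose i)^2 * (x \<bullet> y) ^ (2 * i) * (norm x * norm y) ^ (2 * (s - i))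
          = (norm x * norm y) ^ (2 * s) * ((fact s)^2 * real (s choose i)^2 * (cos \<theta>) ^ (2 * i))"
        unfolding xy e power_add power_mult_distrib by (simp add: mult_ac)
    qed
    also have "\<dots> = norm x ^ (2 * s) * norm y ^ (2 * s) * (\<Sum>i\<le>s. (fact s)^2 * real (s choose i)^2 * (cos \<theta>) ^ (2 * i))"
      by (simp add: sum_distrib_left power_mult_distrib)
    finally show "T = norm x ^ (2 * s) * norm y ^ (2 * s) * (\<Sum>i\<le>s. (fact s)^2 * real (s choose i)^2 * (cos \<theta>) ^ (2 * i))" .
  qed
  have P3: "AE \<omega> in N. (\<lambda>D::nat. (\<Sum>k<D. Fk x y s (U \<omega> k)) / real D) \<longlonglongrightarrow> T"
  proof -
    interpret prob_space N by (rule N)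
    note rowind = row_transport[OF N U_indep U_distr]
    have Ud: "distr N borel (\<lambda>\<omega>. (\<lambda>\<omega>. U \<omega> k) \<omega> j) = std_complex_normal" for k j
      using U_distr by simp
    note tr = moment_transport[OF N rowind Ud]
    have rowm[measurable]: "(\<lambda>\<omega>. U \<omega> k) \<in> measurable N (PiM UNIV (\<lambda>_::'d. borel))" for k
      by (rule tr(2)[OF Fk_meas])
    have rowd: "distr N (PiM UNIV (\<lambda>_::'d. borel)) (\<lambda>\<omega>. U \<omega> k) = PiM UNIV (\<lambda>_::'d. SCN)" for k
      by (rule tr(3)[OF Fk_meas])
    have intF: "integrable N (\<lambda>\<omega>. Fk x y n (U \<omega> k))" for n k
    proof -
      have "integrable (distr N (PiM UNIV (\<lambda>_::'d. borel)) (\<lambda>\<omega>. U \<omega> k)) (Fk x y n)"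
        unfolding rowd by (rule integrable_Pd_Fk)
      then show ?thesis by (subst (asm) integrable_distr_eq) auto
    qed
    have expF: "expectation (\<lambda>\<omega>. Fk x y n (U \<omega> k)) = integral\<^sup>L (PiM UNIV (\<lambda>_::'d. SCN)) (Fk x y n)" for n k
      by (rule tr(1)[OF Fk_meas])
    define X where "X k \<omega> = Fk x y s (U \<omega> k)" for k \<omega>
    have Xm[measurable]: "X k \<in> borel_measurable N" for k unfolding X_def by measurable
    have Xsq: "X i \<omega> * X i \<omega> = Fk x y (2 * s) (U \<omega> i)" for i \<omega>
      unfolding X_def Fk_sq[symmetric] by (simp add: power2_eq_square)
    have indep: "indep_var borel (X i) borel (X j)" if "i \<noteq> j" for i j
    proof -
      have R: "indep_var (PiM ({i} \<times> UNIV) (\<lambda>_. borel)) (\<lambda>\<omega>. restrict (\<lambda>p. (\<lambda>(k, j) \<omega>. U \<omega> k j) p \<omega>) ({i} \<times> UNIV))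
                         (PiM ({j} \<times> UNIV) (\<lambda>_. borel)) (\<lambda>\<omega>. restrict (\<lambda>p. (\<lambda>(k, j) \<omega>. U \<omega> k j) p \<omega>) ({j} \<times> UNIV))"
        by (rule indep_var_restrict[OF U_indep]) (use that in auto)
      have Y1: "(\<lambda>f. Fk x y s (\<lambda>j'. f (i, j'))) \<in> borel_measurable (PiM ({i} \<times> UNIV) (\<lambda>_. borel))"
        by (rule measurable_compose[OF row_meas Fk_meas])
      have Y2: "(\<lambda>f. Fk x y s (\<lambda>j'. f (j, j'))) \<in> borel_measurable (PiM ({j} \<times> UNIV) (\<lambda>_. borel))"
        by (rule measurable_compose[OF row_meas Fk_meas])
      have "indep_var borel ((\<lambda>f. Fk x y s (\<lambda>j'. f (i, j'))) \<circ> (\<lambda>\<omega>. restrict (\<lambda>p. (\<lambda>(k, j) \<omega>. U \<omega> k j) p \<omega>) ({i} \<times> UNIV)))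
                     borel ((\<lambda>f. Fk x y s (\<lambda>j'. f (j, j'))) \<circ> (\<lambda>\<omega>. restrict (\<lambda>p. (\<lambda>(k, j) \<omega>. U \<omega> k j) p \<omega>) ({j} \<times> UNIV)))"
        by (rule indep_var_compose[OF R Y1 Y2])
      moreover have "((\<lambda>f. Fk x y s (\<lambda>j'. f (i, j'))) \<circ> (\<lambda>\<omega>. restrict (\<lambda>p. (\<lambda>(k, j) \<omega>. U \<omega> k j) p \<omega>) ({i} \<times> UNIV))) = X i"
        "((\<lambda>f. Fk x y s (\<lambda>j'. f (j, j'))) \<circ> (\<lambda>\<omega>. restrict (\<lambda>p. (\<lambda>(k, j) \<omega>. U \<omega> k j) p \<omega>) ({j} \<times> UNIV))) = X j"
        by (auto simp: fun_eq_iff X_def)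
      ultimately show ?thesis by simp
    qed
    have "AE \<omega> in N. (\<lambda>n. (\<Sum>k<n. X k \<omega>) / real n) \<longlonglongrightarrow> T"
    proof (rule slln_nonneg[where msq="integral\<^sup>L (PiM UNIV (\<lambda>_::'d. SCN)) (Fk x y (2 * s))"])
      show "X k \<in> borel_measurable N" for k by (rule Xm)
      show "0 \<le> X k \<omega>" for k \<omega> unfolding X_def Fk_def by simp
      show "integrable N (X k)" for k unfolding X_def by (rule intF)
      show "integrable N (\<lambda>\<omega>. X i \<omega> * X j \<omega>)" for i j
      proof (cases "i = j")
        case True
        then show ?thesis unfolding Xsq by (simp add: Xsq intF)
      next
        case False
        show ?thesis by (rule indep_var_integrable[OF indep[OF False]]) (simp_all add: X_def[abs_def] intF)
      qed
      show "expectation (X k) = T" for k unfolding X_def expF T_def by (rule integral_Pd_Fk)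
      show "expectation (\<lambda>\<omega>. (X k \<omega>)^2) = integral\<^sup>L (PiM UNIV (\<lambda>_::'d. SCN)) (Fk x y (2 * s))" for k
        unfolding power2_eq_square Xsq by (rule expF)
      show "expectation (\<lambda>\<omega>. X i \<omega> * X j \<omega>) = T^2" if "i \<noteq> j" for i j
      proof -
        have "expectation (\<lambda>\<omega>. X i \<omega> * X j \<omega>) = expectation (X i) * expectation (X j)"
          by (rule indep_var_lebesgue_integral[OF indep[OF that]]) (simp_all add: X_def[abs_def] intF)
        also have "\<dots> = T * T" unfolding X_def expF T_def integral_Pd_Fk ..
        finally show ?thesis by (simp add: power2_eq_square)
      qed
    qed
    then show ?thesis unfolding X_def .
  qed
  have seq: "(\<lambda>D::nat. \<Sum>k<D. (1 / sqrt (real D) * cmod (rc_dot x (U \<omega> k)) ^ (2 * s))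
                            * (1 / sqrt (real D) * cmod (rc_dot y (U \<omega> k)) ^ (2 * s)))
           = (\<lambda>D::nat. (\<Sum>k<D. Fk x y s (U \<omega> k)) / real D)" for \<omega>
  proof
    fix D :: nat
    have q: "(1 / sqrt (real D)) * (1 / sqrt (real D)) = 1 / real D"
      by (simp add: real_sqrt_mult[symmetric])
    have t: "(1 / sqrt (real D) * a) * (1 / sqrt (real D) * b) = a * b / real D" for a b :: real
    proof -
      have "(1 / sqrt (real D) * a) * (1 / sqrt (real D) * b) = ((1 / sqrt (real D)) * (1 / sqrt (real D))) * (a * b)"
        by (simp only: mult_ac)
      then show ?thesis unfolding q by simp
    qed
    then show "(\<Sum>k<D. (1 / sqrt (real D) * cmod (rc_dot x (U \<omega> k)) ^ (2 * s))
                            * (1 / sqrt (real D) * cmod (rc_dot y (U \<omega> k)) ^ (2 * s)))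
           = (\<Sum>k<D. Fk x y s (U \<omega> k)) / real D"
      unfolding sum_divide_distrib Fk_def
      by (intro sum.cong refl) (simp only: t)
  qed
  show ?thesis using P1 P2 P3 unfolding seq T_def by simp
qed

end
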